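(* Let $\mathbf M_k=\mathbf U_k\boldsymbol\Sigma_k\mathbf V_k^\top$ be compact SVDs, $\mathbf U:=(\mathbf U_1,\dots,\mathbf U_K)\in\mathbb R^{d_1\times\mathring r}$, $\mathbf V:=(\mathbf V_1,\dots,\mathbf V_K)\in\mathbb R^{d_2\times\mathring r}$ with $\mathring r=\sum_kr_k$. Then $$\mathscr M_1(\mathcal M)\mathscr M_1(\mathcal M)^\top=\mathbf U\,\mathrm{diag}(n_1^*\boldsymbol\Sigma_1^2,\dots,n_K^*\boldsymbol\Sigma_K^2)\,\mathbf U^\top,\qquad \mathscr M_2(\mathcal M)\mathscr M_2(\mathcal M)^\top=\mathbf V\,\mathrm{diag}(n_1^*\boldsymbol\Sigma_1^2,\dots,n_K^*\boldsymbol\Sigma_K^2)\,\mathbf V^\top,$$ and $\kappa_1\le\kappa_0\kappa(\mathbf U)(n^*_{\max}/n^*_{\min})^{1/2}$, $\kappa_2\le\kappa_0\kappa(\mathbf V)(n^*_{\max}/n^*_{\min})^{1/2}$, where $n^*_{\min}=\min_kn_k^*$, $n^*_{\max}=\max_kn_k^*$. Moreover, if $r_1=\max_k r_k$ and $\mathrm{rank}(\mathbf U)=\mathrm{rank}(\mathbf V)=r_1$ (all $\mathbf M_k$ have column and row spaces contained in those of $\mathbf M_1$), then $\max\{\kappa_1,\kappa_2\}\le\kappa_0(K^2/\alpha)^{1/2}$; and if the column spaces of the $\mathbf U_k$ are mutually orthogonal and the column spaces of the $\mathbf V_k$ are mutually orthogonal (so $\mathrm{rank}(\mathbf U)=\mathrm{rank}(\mathbf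 V)=\mathring r$), then $\max\{\kappa_1,\kappa_2\}\le\kappa_0(K/\alpha)^{1/2}$.
   Context: Deterministic setting: $\mathbf M_1,\dots,\mathbf M_K\in\mathbb R^{d_1\times d_2}$ with ranks $r_k\ge1$, labels $s^*\in[K]^n$ with $n_k^*:=|\{i:s_i^*=k\}|\ge1$, $\alpha:=\min_kn_k^*\cdot(n/K)^{-1}$. $\mathcal M\in\mathbb R^{d_1\times d_2\times n}$ has $i$-th slice $\mathbf M_{s_i^*}$; $\mathscr M_1(\mathcal M)\in\mathbb R^{d_1\times d_2n}$ has columns $\mathcal M(:,i_2,i_3)$ and $\mathscr M_2(\mathcal M)\in\mathbb R^{d_2\times d_1n}$ has columns $\mathcal M(i_1,:,i_3)$. For a nonzero matrix $\mathbf A$, its condition number $\kappa(\mathbf A)$ is the ratio of its largest to its smallest nonzero singular value; $\kappa_j:=\kappa(\mathscr M_j(\mathcal M))$ for $j=1,2$. $\kappa_0:=\max_k\|\mathbf M_k\|/\min_k\sigma_{r_k}(\mathbf M_k)$. *)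

theory Defs
  imports "Jordan_Normal_Form.DL_Rank" "Jordan_Normal_Form.Char_Poly"
begin

definition nz_sing_vals :: "real mat \<Rightarrow> real set" where
  "nz_sing_vals A = {sqrt e | e. eigenvalue (A\<^sup>T * A) e \<and> e > 0}"

definition sig_max :: "real mat \<Rightarrow> real" where
  "sig_max A = Max (nz_sing_vals A)"

definition sig_min :: "real mat \<Rightarrow> real" where
  "sig_min A = Min (nz_sing_vals A)"

definition cond_num :: "real mat \<Rightarrow> real" where
  "cond_num A = sig_max A / sig_min A"

definition blk_off :: "(nat \<Rightarrow> nat) \<Rightarrow> nat \<Rightarrow> nat" where
  "blk_off r k = (\<Sum>l<k. r l)"

definition blk_of :: "(nat \<Rightarrow> nat) \<Rightarrow> nat \<Rightarrow> nat" where
  "blk_of r j = (LEAST k. j < blk_off r (Suc k))"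

text \<open>Horizontal concatenation (Us 0, ..., Us (K-1)), each Us k of size d x r k.\<close>
definition hcat :: "nat \<Rightarrow> (nat \<Rightarrow> nat) \<Rightarrow> nat \<Rightarrow> (nat \<Rightarrow> real mat) \<Rightarrow> real mat" where
  "hcat d r K Us = mat d (blk_off r K)
     (\<lambda>(a,j). Us (blk_of r j) $$ (a, j - blk_off r (blk_of r j)))"

definition block_diag :: "(nat \<Rightarrow> nat) \<Rightarrow> nat \<Rightarrow> (nat \<Rightarrow> real mat) \<Rightarrow> real mat" where
  "block_diag r K Ds = mat (blk_off r K) (blk_off r K)
     (\<lambda>(i,j). if blk_of r i = blk_of r j
              then Ds (blk_of r i) $$ (i - blk_off r (blk_of r i), j - blk_off r (blk_of r j))
              else 0)"

text \<open>Tensor with i-th slice Ms (s i), i < n. Mode-1 unfolding (d1 x d2 n): column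
  with index i3*d2 + i2 is the fibre T(:,i2,i3). Mode-2 unfolding (d2 x d1 n): column
  with index i3*d1 + i1 is the fibre T(i1,:,i3).\<close>
definition unfold1 :: "nat \<Rightarrow> nat \<Rightarrow> nat \<Rightarrow> (nat \<Rightarrow> real mat) \<Rightarrow> (nat \<Rightarrow> nat) \<Rightarrow> real mat" where
  "unfold1 d1 d2 n Ms s = mat d1 (d2 * n) (\<lambda>(a,j). Ms (s (j div d2)) $$ (a, j mod d2))"

definition unfold2 :: "nat \<Rightarrow> nat \<Rightarrow> nat \<Rightarrow> (nat \<Rightarrow> real mat) \<Rightarrow> (nat \<Rightarrow> nat) \<Rightarrow> real mat" where
  "unfold2 d1 d2 n Ms s = mat d2 (d1 * n) (\<lambda>(b,j). Ms (s (j div d1)) $$ (j mod d1, b))"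

definition cluster_size :: "nat \<Rightarrow> (nat \<Rightarrow> nat) \<Rightarrow> nat \<Rightarrow> nat" where
  "cluster_size n s k = card {i. i < n \<and> s i = k}"

end

theory Submission
  imports Defs
begin


section \<open>Compactness in coordinates\<close>

lemma real_bolzano:
  fixes a :: "nat \<Rightarrow> real"
  assumes "\<And>k. \<bar>a k\<bar> \<le> 1"
  shows "\<exists>g l. strict_mono g \<and> (\<lambda>k. a (g k)) \<longlonglongrightarrow> l"
proof -
  obtain g where g: "strict_mono g" "monoseq (\<lambda>n. a (g n))" using seq_monosub by blast
  have "Bseq (\<lambda>n. a (g n))" using assms by (intro BseqI'[of _ 1]) auto
  then have "convergent (\<lambda>n. a (g n))" using g(2) Bseq_monoseq_convergent by blast
  then show ?thesis using g(1) unfolding convergent_def by blast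
qed

lemma vec_bolzano:
  fixes X :: "nat \<Rightarrow> nat \<Rightarrow> real"
  assumes "\<And>k i. i < m \<Longrightarrow> \<bar>X k i\<bar> \<le> 1"
  shows "\<exists>h L. strict_mono h \<and> (\<forall>i<m. (\<lambda>k. X (h k) i) \<longlonglongrightarrow> L i)"
  using assms
proof (induction m arbitrary: X)
  case 0
  then show ?case by (intro exI[of _ id] exI[of _ "\<lambda>_. 0"]) (auto simp: strict_mono_def)
next
  case (Suc m)
  obtain h L where h: "strict_mono h" "\<forall>i<m. (\<lambda>k. X (h k) i) \<longlonglongrightarrow> L i"
    using Suc.IH[of X] Suc.prems by auto
  obtain g l where g: "strict_mono g" "(\<lambda>k. X (h (g k)) m) \<longlonglongrightarrow> l"
    using real_bolzano[of "\<lambda>k. X (h k) m"] Suc.prems by auto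
  have "\<forall>i<Suc m. (\<lambda>k. X ((h \<circ> g) k) i) \<longlonglongrightarrow> (L(m := l)) i"
  proof (intro allI impI)
    fix i assume i: "i < Suc m"
    show "(\<lambda>k. X ((h \<circ> g) k) i) \<longlonglongrightarrow> (L(m := l)) i"
    proof (cases "i = m")
      case True then show ?thesis using g by simp
    next
      case False
      then have "i < m" using i by simp
      then have "(\<lambda>k. X (h k) i) \<longlonglongrightarrow> L i" using h by auto
      from LIMSEQ_subseq_LIMSEQ[OF this g(1)] show ?thesis using False by (simp add: o_def)
    qed
  qed
  moreover have "strict_mono (h \<circ> g)" using h(1) g(1) by (rule strict_mono_o)
  ultimately show ?case by blast
qed

definition coord_lim :: "nat \<Rightarrow> (nat \<Rightarrow> real vec) \<Rightarrow> real vec \<Rightarrow> bool" where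
  "coord_lim m X L \<longleftrightarrow> (\<forall>k. X k \<in> carrier_vec m) \<and> L \<in> carrier_vec m \<and>
     (\<forall>i<m. (\<lambda>k. X k $ i) \<longlonglongrightarrow> L $ i)"

lemma coord_lim_subseq:
  assumes "coord_lim m X L" "strict_mono h"
  shows "coord_lim m (X \<circ> h) L"
  using assms unfolding coord_lim_def
proof (auto simp: o_def)
  fix i assume "strict_mono h" "\<forall>i<m. (\<lambda>k. X k $ i) \<longlonglongrightarrow> L $ i" "i < m"
  then show "(\<lambda>k. X (h k) $ i) \<longlonglongrightarrow> L $ i"
    using LIMSEQ_subseq_LIMSEQ[of "\<lambda>k. X k $ i" "L $ i" h] by (simp add: o_def)
qed

lemma vec_bolzano':
  fixes X :: "nat \<Rightarrow> real vec"
  assumes "\<And>k. X k \<in> carrier_vec m" "\<And>k i. i < m \<Longrightarrow> \<bar>X k $ i\<bar> \<le> 1"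
  shows "\<exists>h L. strict_mono h \<and> coord_lim m (X \<circ> h) L"
proof -
  obtain h L where h: "strict_mono h" "\<forall>i<m. (\<lambda>k. X (h k) $ i) \<longlonglongrightarrow> L i"
    using vec_bolzano[of m "\<lambda>k i. X k $ i"] assms(2) by auto
  have "coord_lim m (X \<circ> h) (vec m L)"
    unfolding coord_lim_def using assms(1) h(2) by auto
  then show ?thesis using h(1) by blast
qed

lemma coord_lim_sprod:
  assumes "coord_lim m X L" "y \<in> carrier_vec m"
  shows "(\<lambda>k. X k \<bullet> y) \<longlonglongrightarrow> L \<bullet> y"
proof -
  have "(\<lambda>k. \<Sum>i=0..<m. X k $ i * y $ i) \<longlonglongrightarrow> (\<Sum>i=0..<m. L $ i * y $ i)"
    using assms unfolding coord_lim_def by (intro tendsto_intros) auto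
  then show ?thesis using assms(2) unfolding scalar_prod_def by simp
qed

lemma coord_lim_sprod2:
  assumes "coord_lim m X L" "coord_lim m Y M"
  shows "(\<lambda>k. X k \<bullet> Y k) \<longlonglongrightarrow> L \<bullet> M"
proof -
  have "(\<lambda>k. \<Sum>i=0..<m. X k $ i * Y k $ i) \<longlonglongrightarrow> (\<Sum>i=0..<m. L $ i * M $ i)"
    using assms unfolding coord_lim_def by (intro tendsto_intros) auto
  moreover have "dim_vec (Y k) = m" for k using assms unfolding coord_lim_def by auto
  moreover have "dim_vec M = m" using assms unfolding coord_lim_def by auto
  ultimately show ?thesis unfolding scalar_prod_def by simp
qed

lemma coord_lim_mult:
  assumes "coord_lim m X L" "B \<in> carrier_mat p m"
  shows "coord_lim p (\<lambda>k. B *\<^sub>v X k) (B *\<^sub>v L)"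
proof -
  have "(\<lambda>k. (B *\<^sub>v X k) $ i) \<longlonglongrightarrow> (B *\<^sub>v L) $ i" if i: "i < p" for i
  proof -
    have "(\<lambda>k. X k \<bullet> row B i) \<longlonglongrightarrow> L \<bullet> row B i"
      using coord_lim_sprod[OF assms(1)] assms(2) i by auto
    moreover have "X k \<bullet> row B i = (B *\<^sub>v X k) $ i" for k
      using assms i unfolding coord_lim_def by (auto intro!: comm_scalar_prod)
    moreover have "L \<bullet> row B i = (B *\<^sub>v L) $ i"
      using assms i unfolding coord_lim_def by (auto intro!: comm_scalar_prod)
    ultimately show ?thesis by simp
  qed
  then show ?thesis using assms unfolding coord_lim_def by auto
qed

lemma attains_max_coord:
  fixes f :: "real vec \<Rightarrow> real"
  assumes S: "S \<subseteq> carrier_vec m" "S \<noteq> {}"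
    and bnd: "\<And>x i. x \<in> S \<Longrightarrow> i < m \<Longrightarrow> \<bar>x $ i\<bar> \<le> 1"
    and closed: "\<And>X L. coord_lim m X L \<Longrightarrow> (\<forall>k. X k \<in> S) \<Longrightarrow> L \<in> S"
    and cont: "\<And>X L. coord_lim m X L \<Longrightarrow> (\<lambda>k. f (X k)) \<longlonglongrightarrow> f L"
  shows "\<exists>x\<in>S. \<forall>y\<in>S. f y \<le> f x"
proof -
  have sub: "\<exists>h L. strict_mono h \<and> coord_lim m (X \<circ> h) L \<and> L \<in> S" if X: "\<forall>k. X k \<in> S" for X :: "nat \<Rightarrow> real vec"
  proof -
    obtain h L where h: "strict_mono h" "coord_lim m (X \<circ> h) L"
      using vec_bolzano'[of X m] X S bnd by blast
    then have "L \<in> S" using closed[OF h(2)] X by auto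
    then show ?thesis using h by blast
  qed
  have bdd: "bdd_above (f ` S)"
  proof (rule ccontr)
    assume "\<not> bdd_above (f ` S)"
    then have "\<forall>k::nat. \<exists>x\<in>S. real k < f x"
    proof (intro allI)
      fix k :: nat
      assume nb: "\<not> bdd_above (f ` S)"
      show "\<exists>x\<in>S. real k < f x"
      proof (rule ccontr)
        assume "\<not> (\<exists>x\<in>S. real k < f x)"
        then have "\<forall>y\<in>f ` S. y \<le> real k" by auto
        then have "bdd_above (f ` S)" unfolding bdd_above_def by blast
        then show False using nb by simp
      qed
    qed
    then obtain X where X: "\<forall>k. X k \<in> S \<and> real k < f (X k)" by metis
    obtain h L where h: "strict_mono h" "coord_lim m (X \<circ> h) L" "L \<in> S" using sub[of X] X by blast
    have conv: "(\<lambda>k. f (X (h k))) \<longlonglongrightarrow> f L" using cont[OF h(2)] by (simp add: o_def)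
    then have "Bseq (\<lambda>k. f (X (h k)))" by (rule convergent_imp_Bseq[OF convergentI])
    then obtain B where B: "\<forall>k. norm (f (X (h k))) \<le> B" by (meson BseqE)
    obtain k :: nat where k: "B < real k" using reals_Archimedean2 by blast
    have "real k \<le> real (h k)" using seq_suble[OF h(1)] by simp
    also have "\<dots> < f (X (h k))" using X by auto
    also have "\<dots> \<le> B" using B[rule_format, of k] by simp
    finally show False using k by simp
  qed
  define s where "s = Sup (f ` S)"
  have "\<forall>k::nat. \<exists>x\<in>S. s - 1 / (real k + 1) < f x"
  proof
    fix k :: nat
    have "s - 1 / (real k + 1) < s" by simp
    then show "\<exists>x\<in>S. s - 1 / (real k + 1) < f x"
      using less_cSupD[of "f ` S"] S(2) unfolding s_def by auto
  qed
  then obtain X where X: "\<forall>k. X k \<in> S \<and> s - 1 / (real k + 1) < f (X k)" by metis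
  obtain h L where h: "strict_mono h" "coord_lim m (X \<circ> h) L" "L \<in> S" using sub[of X] X by blast
  have conv: "(\<lambda>k. f (X (h k))) \<longlonglongrightarrow> f L" using cont[OF h(2)] by (simp add: o_def)
  have le: "f (X (h k)) \<le> s" for k using cSup_upper[OF _ bdd] X unfolding s_def by auto
  have "f L \<le> s" using LIMSEQ_le_const2[OF conv] le by auto
  moreover have "s \<le> f L"
  proof (rule ccontr)
    assume "\<not> s \<le> f L"
    then have "s - f L > 0" by simp
    then obtain k0 :: nat where k0: "1 / (real k0 + 1) < s - f L"
      by (metis add.commute nat_approx_posE of_nat_Suc)
    from conv have "\<forall>\<^sub>F k in sequentially. dist (f (X (h k))) (f L) < (s - f L) - 1 / (real k0 + 1)"
      using k0 by (intro tendstoD) auto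
    then obtain k1 where k1: "\<forall>k\<ge>k1. dist (f (X (h k))) (f L) < (s - f L) - 1 / (real k0 + 1)"
      unfolding eventually_sequentially by blast
    define k where "k = max k0 k1"
    have "k0 \<le> h k" using seq_suble[OF h(1), of k] unfolding k_def by simp
    then have "1 / (real (h k) + 1) \<le> 1 / (real k0 + 1)" by (simp add: frac_le)
    moreover have "s - 1 / (real (h k) + 1) < f (X (h k))" using X by auto
    moreover have "dist (f (X (h k))) (f L) < (s - f L) - 1 / (real k0 + 1)" using k1 unfolding k_def by simp
    ultimately show False by (simp add: dist_real_def)
  qed
  ultimately have "f L = s" by simp
  then show ?thesis using h(3) cSup_upper[OF _ bdd] unfolding s_def by (metis imageI)
qed



lemma mat_vec_zero: "A \<in> carrier_mat m n \<Longrightarrow> A *\<^sub>v 0\<^sub>v n = (0\<^sub>v m :: real vec)"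
  by (intro eq_vecI) (auto simp: scalar_prod_def)

lemma sprod_self_nonneg: "0 \<le> (v :: real vec) \<bullet> v"
  unfolding scalar_prod_def by (intro sum_nonneg) auto

lemma sprod_self_eq_0:
  assumes "(v :: real vec) \<in> carrier_vec n" "v \<bullet> v = 0"
  shows "v = 0\<^sub>v n"
proof -
  have "\<forall>i\<in>{0..<dim_vec v}. v $ i * v $ i = 0"
    using assms(2) unfolding scalar_prod_def by (subst sum_nonneg_eq_0_iff[symmetric]) auto
  then show ?thesis using assms(1) by (intro eq_vecI) auto
qed

lemma sprod_self_pos:
  assumes "(v :: real vec) \<in> carrier_vec n" "v \<noteq> 0\<^sub>v n"
  shows "0 < v \<bullet> v"
  using sprod_self_eq_0[OF assms(1)] assms(2) sprod_self_nonneg[of v] by force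

lemma coord_sq_le:
  assumes "(v :: real vec) \<in> carrier_vec n" "i < n"
  shows "v $ i * v $ i \<le> v \<bullet> v"
proof -
  have "v $ i * v $ i = (\<Sum>j\<in>{i}. v $ j * v $ j)" by simp
  also have "\<dots> \<le> (\<Sum>j\<in>{0..<n}. v $ j * v $ j)"
    using assms by (intro sum_mono2) auto
  finally show ?thesis using assms unfolding scalar_prod_def by simp
qed

lemma coord_abs_le1:
  assumes "(v :: real vec) \<in> carrier_vec n" "i < n" "v \<bullet> v = 1"
  shows "\<bar>v $ i\<bar> \<le> 1"
proof -
  have "\<bar>v $ i\<bar>^2 \<le> 1^2" using coord_sq_le[OF assms(1,2)] assms(3) by (simp add: power2_eq_square)
  then show ?thesis using abs_le_square_iff by (metis abs_one power2_abs)
qed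

lemma lin_coeff_zero:
  fixes a c :: real
  assumes "\<forall>t. 2 * t * a \<le> t * t * c"
  shows "a = 0"
proof (rule ccontr)
  assume a: "a \<noteq> 0"
  define u where "u = \<bar>c\<bar> + 1"
  define t where "t = a / u"
  have pos: "u > 0" unfolding u_def by simp
  have tu: "t * u = a" unfolding t_def using pos by simp
  have "2 * t * a \<le> t * t * c" using assms by simp
  then have "2 * t * a * (u * u) \<le> t * t * c * (u * u)" using pos by (simp add: mult_right_mono)
  moreover have "2 * t * a * (u * u) = 2 * (a * a) * u" using tu by (metis mult.assoc mult.commute)
  moreover have "t * t * c * (u * u) = (a * a) * c" using tu by (metis mult.assoc mult.commute)
  ultimately have "2 * (a * a) * u \<le> (a * a) * c" by simp
  moreover have "a * a > 0" using a by (cases "a > 0") (auto simp: zero_less_mult_iff)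
  ultimately have "(a * a) * (2 * u) \<le> (a * a) * c" by (simp add: algebra_simps)
  then have "2 * u \<le> c" using \<open>a * a > 0\<close> mult_le_cancel_left_pos by blast
  then have "2 * (\<bar>c\<bar> + 1) \<le> c" unfolding u_def .
  then show False by (cases "c \<ge> 0") auto
qed

section \<open>Variational characterization\<close>

definition orthC :: "nat \<Rightarrow> real vec set \<Rightarrow> real vec set" where
  "orthC p Y = {x \<in> carrier_vec p. \<forall>y\<in>Y. x \<bullet> y = 0}"

lemma orthC_add: "x \<in> orthC p Y \<Longrightarrow> z \<in> orthC p Y \<Longrightarrow> Y \<subseteq> carrier_vec p \<Longrightarrow> x + z \<in> orthC p Y"
  unfolding orthC_def by (auto simp: add_scalar_prod_distrib[of _ p])

lemma orthC_smult: "x \<in> orthC p Y \<Longrightarrow> Y \<subseteq> carrier_vec p \<Longrightarrow> t \<cdot>\<^sub>v x \<in> orthC p Y"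
  unfolding orthC_def by (auto simp: smult_scalar_prod_distrib[of _ p])

lemma orthC_minus: "x \<in> orthC p Y \<Longrightarrow> z \<in> orthC p Y \<Longrightarrow> Y \<subseteq> carrier_vec p \<Longrightarrow> x - z \<in> orthC p Y"
  unfolding orthC_def by (auto simp: minus_scalar_prod_distrib[of _ p])

lemma stationary:
  fixes B :: "real mat" and \<sigma> \<mu> :: real
  assumes B: "B \<in> carrier_mat q p" and Y: "Y \<subseteq> carrier_vec p"
    and inv: "\<forall>x\<in>orthC p Y. B\<^sup>T *\<^sub>v (B *\<^sub>v x) \<in> orthC p Y"
    and x: "x \<in> orthC p Y" and fx: "(B *\<^sub>v x) \<bullet> (B *\<^sub>v x) = \<mu> * (x \<bullet> x)"
    and ext: "\<forall>y\<in>orthC p Y. \<sigma> * ((B *\<^sub>v y) \<bullet> (B *\<^sub>v y)) \<le> \<sigma> * (\<mu> * (y \<bullet> y))"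
    and sig: "\<sigma> \<noteq> 0"
  shows "B\<^sup>T *\<^sub>v (B *\<^sub>v x) = \<mu> \<cdot>\<^sub>v x"
proof -
  have xc: "x \<in> carrier_vec p" using x unfolding orthC_def by auto
  define z where "z = B\<^sup>T *\<^sub>v (B *\<^sub>v x) - \<mu> \<cdot>\<^sub>v x"
  have zC: "z \<in> orthC p Y" unfolding z_def
    by (rule orthC_minus[OF _ orthC_smult[OF x Y] Y]) (use inv x in auto)
  have zc: "z \<in> carrier_vec p" using zC unfolding orthC_def by auto
  have Bx: "B *\<^sub>v x \<in> carrier_vec q" using B xc by auto
  have Bz: "B *\<^sub>v z \<in> carrier_vec q" using B zc by auto
  have key: "(B *\<^sub>v x) \<bullet> (B *\<^sub>v z) - \<mu> * (x \<bullet> z) = z \<bullet> z"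
  proof -
    have "(B *\<^sub>v x) \<bullet> (B *\<^sub>v z) = (B\<^sup>T *\<^sub>v (B *\<^sub>v x)) \<bullet> z"
      using transpose_vec_mult_scalar[OF B zc Bx] by simp
    moreover have "z \<bullet> z = (B\<^sup>T *\<^sub>v (B *\<^sub>v x)) \<bullet> z - (\<mu> \<cdot>\<^sub>v x) \<bullet> z"
      unfolding z_def using B xc zc by (subst minus_scalar_prod_distrib[of _ p]) auto
    moreover have "(\<mu> \<cdot>\<^sub>v x) \<bullet> z = \<mu> * (x \<bullet> z)" using xc zc by simp
    ultimately show ?thesis by simp
  qed
  have "2 * t * (\<sigma> * (z \<bullet> z)) \<le> t * t * (\<sigma> * (\<mu> * (z \<bullet> z) - (B *\<^sub>v z) \<bullet> (B *\<^sub>v z)))" for t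
  proof -
    have yC: "x + t \<cdot>\<^sub>v z \<in> orthC p Y" by (rule orthC_add[OF x orthC_smult[OF zC Y] Y])
    have e1: "(B *\<^sub>v (x + t \<cdot>\<^sub>v z)) \<bullet> (B *\<^sub>v (x + t \<cdot>\<^sub>v z)) =
      (B *\<^sub>v x) \<bullet> (B *\<^sub>v x) + 2 * t * ((B *\<^sub>v x) \<bullet> (B *\<^sub>v z)) + t * t * ((B *\<^sub>v z) \<bullet> (B *\<^sub>v z))"
      using B xc zc Bx Bz
      by (simp add: mult_add_distrib_mat_vec[OF B] add_scalar_prod_distrib[of _ q]
            scalar_prod_add_distrib[of _ q] comm_scalar_prod[of "B *\<^sub>v z" q "B *\<^sub>v x"]
            mult_mat_vec[OF B] algebra_simps)
    have e2: "(x + t \<cdot>\<^sub>v z) \<bullet> (x + t \<cdot>\<^sub>v z) = x \<bullet> x + 2 * t * (x \<bullet> z) + t * t * (z \<bullet> z)"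
      using xc zc
      by (simp add: add_scalar_prod_distrib[of _ p] scalar_prod_add_distrib[of _ p]
            comm_scalar_prod[of z p x] algebra_simps)
    have "\<sigma> * ((B *\<^sub>v (x + t \<cdot>\<^sub>v z)) \<bullet> (B *\<^sub>v (x + t \<cdot>\<^sub>v z))) \<le> \<sigma> * (\<mu> * ((x + t \<cdot>\<^sub>v z) \<bullet> (x + t \<cdot>\<^sub>v z)))"
      using ext yC by blast
    then show ?thesis unfolding e1 e2 using fx key by (simp add: algebra_simps)
  qed
  then have "\<sigma> * (z \<bullet> z) = 0" by (intro lin_coeff_zero) blast
  then have "z = 0\<^sub>v p" using sig sprod_self_eq_0[OF zc] by simp
  then have zi: "z $ i = 0" if "i < p" for i using that by simp
  show ?thesis
  proof (rule eq_vecI)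
    fix i assume "i < dim_vec (\<mu> \<cdot>\<^sub>v x)"
    then have i: "i < p" using xc by simp
    show "(B\<^sup>T *\<^sub>v (B *\<^sub>v x)) $ i = (\<mu> \<cdot>\<^sub>v x) $ i"
      using zi[OF i] i B xc unfolding z_def by simp
  qed (use B xc in simp)
qed



lemma sprod_smult_both:
  assumes "(v :: real vec) \<in> carrier_vec n"
  shows "(c \<cdot>\<^sub>v v) \<bullet> (c \<cdot>\<^sub>v v) = c * c * (v \<bullet> v)"
  using assms by simp

lemma var_ext:
  fixes B :: "real mat" and \<sigma> :: real
  assumes B: "B \<in> carrier_mat q p" and Y: "Y \<subseteq> carrier_vec p"
    and x0: "x0 \<in> orthC p Y" "x0 \<noteq> 0\<^sub>v p"
  shows "\<exists>x\<in>orthC p Y. x \<bullet> x = 1 \<and> (\<forall>y\<in>orthC p Y.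
            \<sigma> * ((B *\<^sub>v y) \<bullet> (B *\<^sub>v y)) \<le> \<sigma> * (((B *\<^sub>v x) \<bullet> (B *\<^sub>v x)) * (y \<bullet> y)))"
proof -
  define f where "f v = (B *\<^sub>v v) \<bullet> (B *\<^sub>v v)" for v
  define S where "S = {x \<in> orthC p Y. x \<bullet> x = 1}"
  have fsc: "f (c \<cdot>\<^sub>v v) = c * c * f v" if "v \<in> carrier_vec p" for c v
    unfolding f_def using that B by (simp add: mult_mat_vec[OF B])
  have normalize: "(1 / sqrt (v \<bullet> v)) \<cdot>\<^sub>v v \<in> S" if v: "v \<in> orthC p Y" "v \<noteq> 0\<^sub>v p" for v
  proof -
    have vc: "v \<in> carrier_vec p" using v unfolding orthC_def by auto
    have pos: "v \<bullet> v > 0" using sprod_self_pos[OF vc v(2)] .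
    have "((1 / sqrt (v \<bullet> v)) \<cdot>\<^sub>v v) \<bullet> ((1 / sqrt (v \<bullet> v)) \<cdot>\<^sub>v v) = 1"
      using vc pos by (simp add: field_simps)
    then show ?thesis unfolding S_def using orthC_smult[OF v(1) Y] by auto
  qed
  have Ssub: "S \<subseteq> carrier_vec p" unfolding S_def orthC_def by auto
  have Sne: "S \<noteq> {}" using normalize[OF x0] by auto
  have "\<exists>x\<in>S. \<forall>y\<in>S. \<sigma> * f y \<le> \<sigma> * f x"
  proof (rule attains_max_coord[OF Ssub Sne])
    show "\<bar>x $ i\<bar> \<le> 1" if "x \<in> S" "i < p" for x i
      using that coord_abs_le1[of x p i] unfolding S_def orthC_def by auto
  next
    fix X L assume lim: "coord_lim p X L" and XS: "\<forall>k. X k \<in> S"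
    have Lc: "L \<in> carrier_vec p" using lim unfolding coord_lim_def by auto
    have "(\<lambda>k. X k \<bullet> X k) \<longlonglongrightarrow> L \<bullet> L" by (rule coord_lim_sprod2[OF lim lim])
    moreover have "X k \<bullet> X k = 1" for k using XS unfolding S_def by auto
    ultimately have "(\<lambda>k. 1::real) \<longlonglongrightarrow> L \<bullet> L" by simp
    then have "L \<bullet> L = 1" by (simp add: LIMSEQ_const_iff)
    moreover have "L \<bullet> y = 0" if y: "y \<in> Y" for y
    proof -
      have "(\<lambda>k. X k \<bullet> y) \<longlonglongrightarrow> L \<bullet> y" using coord_lim_sprod[OF lim] y Y by auto
      moreover have "X k \<bullet> y = 0" for k using XS y unfolding S_def orthC_def by auto
      ultimately have "(\<lambda>k. 0::real) \<longlonglongrightarrow> L \<bullet> y" by simp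
      then show ?thesis by (simp add: LIMSEQ_const_iff)
    qed
    ultimately show "L \<in> S" unfolding S_def orthC_def using Lc by auto
  next
    fix X L assume lim: "coord_lim p X L"
    have "coord_lim q (\<lambda>k. B *\<^sub>v X k) (B *\<^sub>v L)" by (rule coord_lim_mult[OF lim B])
    from coord_lim_sprod2[OF this this]
    show "(\<lambda>k. \<sigma> * f (X k)) \<longlonglongrightarrow> \<sigma> * f L" unfolding f_def by (intro tendsto_intros)
  qed
  then obtain x where x: "x \<in> S" "\<forall>y\<in>S. \<sigma> * f y \<le> \<sigma> * f x" by blast
  have "\<sigma> * f y \<le> \<sigma> * (f x * (y \<bullet> y))" if y: "y \<in> orthC p Y" for y
  proof (cases "y = 0\<^sub>v p")
    case True
    then show ?thesis unfolding f_def using B mat_vec_zero[OF B] by simp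
  next
    case False
    have yc: "y \<in> carrier_vec p" using y unfolding orthC_def by auto
    have pos: "y \<bullet> y > 0" using sprod_self_pos[OF yc False] .
    define c where "c = 1 / sqrt (y \<bullet> y)"
    have s2: "sqrt (y \<bullet> y) * sqrt (y \<bullet> y) = y \<bullet> y" using pos by simp
    have cc: "c * c = 1 / (y \<bullet> y)" unfolding c_def by (subst s2[symmetric]) simp
    have "\<sigma> * f (c \<cdot>\<^sub>v y) \<le> \<sigma> * f x" using x normalize[OF y False] unfolding c_def by blast
    then have "\<sigma> * f y / (y \<bullet> y) \<le> \<sigma> * f x" unfolding fsc[OF yc] cc by simp
    then show ?thesis using pos by (simp add: divide_le_eq algebra_simps)
  qed
  then show ?thesis using x unfolding S_def f_def by auto
qed

lemma var_eigen:
  fixes B :: "real mat" and \<sigma> :: real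
  assumes B: "B \<in> carrier_mat q p" and Y: "Y \<subseteq> carrier_vec p"
    and x0: "x0 \<in> orthC p Y" "x0 \<noteq> 0\<^sub>v p"
    and inv: "\<forall>x\<in>orthC p Y. B\<^sup>T *\<^sub>v (B *\<^sub>v x) \<in> orthC p Y"
    and sig: "\<sigma> \<noteq> 0"
  shows "\<exists>x\<in>orthC p Y. x \<bullet> x = 1 \<and>
     B\<^sup>T *\<^sub>v (B *\<^sub>v x) = ((B *\<^sub>v x) \<bullet> (B *\<^sub>v x)) \<cdot>\<^sub>v x \<and>
     (\<forall>y\<in>orthC p Y. \<sigma> * ((B *\<^sub>v y) \<bullet> (B *\<^sub>v y)) \<le> \<sigma> * (((B *\<^sub>v x) \<bullet> (B *\<^sub>v x)) * (y \<bullet> y)))"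
proof -
  obtain x where x: "x \<in> orthC p Y" "x \<bullet> x = 1"
    "\<forall>y\<in>orthC p Y. \<sigma> * ((B *\<^sub>v y) \<bullet> (B *\<^sub>v y)) \<le> \<sigma> * (((B *\<^sub>v x) \<bullet> (B *\<^sub>v x)) * (y \<bullet> y))"
    using var_ext[OF B Y x0, of \<sigma>] by blast
  have "B\<^sup>T *\<^sub>v (B *\<^sub>v x) = ((B *\<^sub>v x) \<bullet> (B *\<^sub>v x)) \<cdot>\<^sub>v x"
    by (rule stationary[OF B Y inv x(1) _ x(3) sig]) (simp add: x(2))
  then show ?thesis using x by blast
qed



section \<open>Singular values\<close>

lemma finite_eigs:
  assumes "(M :: real mat) \<in> carrier_mat n n"
  shows "finite {e. eigenvalue M e}"
proof -
  have "char_poly M \<noteq> 0" using degree_monic_char_poly[OF assms] by auto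
  then have "finite {x. poly (char_poly M) x = 0}" by (rule poly_roots_finite)
  then show ?thesis using eigenvalue_root_char_poly[OF assms] by simp
qed

lemma nz_sing_vals_alt: "nz_sing_vals A = sqrt ` {e. eigenvalue (A\<^sup>T * A) e \<and> e > 0}"
  unfolding nz_sing_vals_def by auto

lemma nz_finite: "finite (nz_sing_vals (A :: real mat))"
proof -
  have "A\<^sup>T * A \<in> carrier_mat (dim_col A) (dim_col A)" by auto
  from finite_eigs[OF this] show ?thesis unfolding nz_sing_vals_alt
    by (intro finite_imageI) (auto intro: rev_finite_subset)
qed

lemma nz_pos: "s \<in> nz_sing_vals A \<Longrightarrow> s > 0"
  unfolding nz_sing_vals_def by auto

lemma nz_memI: "eigenvalue (A\<^sup>T * A) e \<Longrightarrow> e > 0 \<Longrightarrow> sqrt e \<in> nz_sing_vals A"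
  unfolding nz_sing_vals_def by auto

lemma nz_memD: "s \<in> nz_sing_vals A \<Longrightarrow> \<exists>e. eigenvalue (A\<^sup>T * A) e \<and> e > 0 \<and> s = sqrt e \<and> e = s * s"
  unfolding nz_sing_vals_def by auto

lemma sig_max_ge: "s \<in> nz_sing_vals A \<Longrightarrow> s \<le> sig_max A"
  unfolding sig_max_def using nz_finite by auto

lemma sig_min_le: "s \<in> nz_sing_vals A \<Longrightarrow> sig_min A \<le> s"
  unfolding sig_min_def using nz_finite by auto

lemma sig_max_in: "nz_sing_vals A \<noteq> {} \<Longrightarrow> sig_max A \<in> nz_sing_vals A"
  unfolding sig_max_def using nz_finite by auto

lemma sig_min_in: "nz_sing_vals A \<noteq> {} \<Longrightarrow> sig_min A \<in> nz_sing_vals A"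
  unfolding sig_min_def using nz_finite by auto

lemma sig_min_pos: "nz_sing_vals A \<noteq> {} \<Longrightarrow> sig_min A > 0"
  using sig_min_in nz_pos by blast

lemma sig_max_pos: "nz_sing_vals A \<noteq> {} \<Longrightarrow> sig_max A > 0"
  using sig_max_in nz_pos by blast


lemma smult_vec_zero_imp:
  assumes "(x :: real vec) \<in> carrier_vec p" "c \<cdot>\<^sub>v x = 0\<^sub>v p" "c \<noteq> 0"
  shows "x = 0\<^sub>v p"
proof (rule eq_vecI)
  fix i assume "i < dim_vec (0\<^sub>v p :: real vec)"
  then have i: "i < p" by simp
  have "(c \<cdot>\<^sub>v x) $ i = 0" using assms(2) i by simp
  then show "x $ i = 0\<^sub>v p $ i" using i assms(1,3) by simp
qed (use assms in simp)

lemma eig_swap: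
  fixes B :: "real mat"
  assumes B: "B \<in> carrier_mat q p" and x: "x \<in> carrier_vec p" "x \<noteq> 0\<^sub>v p"
    and ev: "B\<^sup>T *\<^sub>v (B *\<^sub>v x) = \<mu> \<cdot>\<^sub>v x" and mu: "\<mu> \<noteq> 0"
  shows "eigenvalue (B * B\<^sup>T) \<mu>"
proof -
  define y where "y = B *\<^sub>v x"
  have yc: "y \<in> carrier_vec q" unfolding y_def using B x by auto
  have "y \<noteq> 0\<^sub>v q"
  proof
    assume "y = 0\<^sub>v q"
    then have "\<mu> \<cdot>\<^sub>v x = 0\<^sub>v p" using ev B mat_vec_zero[of "B\<^sup>T" p q] unfolding y_def by simp
    then have "x = 0\<^sub>v p" using mu x(1) smult_vec_zero_imp by blast
    then show False using x(2) by simp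
  qed
  moreover have "(B * B\<^sup>T) *\<^sub>v y = \<mu> \<cdot>\<^sub>v y"
  proof -
    have "(B * B\<^sup>T) *\<^sub>v y = B *\<^sub>v (B\<^sup>T *\<^sub>v y)" using B yc by (simp add: assoc_mult_mat_vec[of _ q p _ q])
    also have "\<dots> = B *\<^sub>v (\<mu> \<cdot>\<^sub>v x)" using ev unfolding y_def by simp
    also have "\<dots> = \<mu> \<cdot>\<^sub>v y" unfolding y_def using B x by (simp add: mult_mat_vec)
    finally show ?thesis .
  qed
  ultimately show ?thesis unfolding eigenvalue_def eigenvector_def using B yc by auto
qed



lemma orthC_empty: "orthC p {} = carrier_vec p"
  unfolding orthC_def by auto

lemma sing_max_bound:
  fixes U :: "real mat"
  assumes U: "U \<in> carrier_mat d R" and w0: "w0 \<in> carrier_vec d" "U\<^sup>T *\<^sub>v w0 \<noteq> 0\<^sub>v R"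
  shows "nz_sing_vals U \<noteq> {} \<and>
    (\<forall>w\<in>carrier_vec d. (U\<^sup>T *\<^sub>v w) \<bullet> (U\<^sup>T *\<^sub>v w) \<le> (sig_max U)^2 * (w \<bullet> w))"
proof -
  define B where "B = U\<^sup>T"
  have B: "B \<in> carrier_mat R d" unfolding B_def using U by auto
  have BT: "B\<^sup>T = U" unfolding B_def by simp
  have w0nz: "w0 \<noteq> 0\<^sub>v d" using w0 U mat_vec_zero[of "U\<^sup>T" R d] by auto
  obtain x where x: "x \<in> carrier_vec d" "x \<bullet> x = 1"
    "B\<^sup>T *\<^sub>v (B *\<^sub>v x) = ((B *\<^sub>v x) \<bullet> (B *\<^sub>v x)) \<cdot>\<^sub>v x"
    "\<forall>y\<in>carrier_vec d. 1 * ((B *\<^sub>v y) \<bullet> (B *\<^sub>v y)) \<le> 1 * (((B *\<^sub>v x) \<bullet> (B *\<^sub>v x)) * (y \<bullet> y))"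
  proof -
    have inv0: "\<forall>x\<in>carrier_vec d. B\<^sup>T *\<^sub>v (B *\<^sub>v x) \<in> carrier_vec d" using B by auto
    show ?thesis using var_eigen[OF B, of "{}" w0 1] w0 w0nz inv0 that unfolding orthC_empty by auto
  qed
  define \<mu> where "\<mu> = (B *\<^sub>v x) \<bullet> (B *\<^sub>v x)"
  have q0: "(B *\<^sub>v w0) \<bullet> (B *\<^sub>v w0) > 0"
    using sprod_self_pos[of "B *\<^sub>v w0" R] w0 B unfolding B_def by auto
  have "(B *\<^sub>v w0) \<bullet> (B *\<^sub>v w0) \<le> \<mu> * (w0 \<bullet> w0)" using x(4) w0 unfolding \<mu>_def by auto
  moreover have "w0 \<bullet> w0 \<ge> 0" by (rule sprod_self_nonneg)
  ultimately have mupos: "\<mu> > 0" using q0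
    by (smt (verit, best) mult_nonpos_nonneg)
  have xnz: "x \<noteq> 0\<^sub>v d" using x(2) by auto
  have "eigenvalue (B * B\<^sup>T) \<mu>"
    using eig_swap[OF B x(1) xnz x(3)[folded \<mu>_def]] mupos by simp
  then have "eigenvalue (U\<^sup>T * U) \<mu>" unfolding B_def by simp
  then have mem: "sqrt \<mu> \<in> nz_sing_vals U" using mupos by (rule nz_memI)
  then have "sqrt \<mu> \<le> sig_max U" by (rule sig_max_ge)
  then have mule: "\<mu> \<le> (sig_max U)^2" using mupos
    by (metis less_eq_real_def power2_le_iff_abs_le real_sqrt_ge_zero real_sqrt_pow2 abs_of_nonneg order.trans sig_max_pos mem empty_iff)
  have "(U\<^sup>T *\<^sub>v w) \<bullet> (U\<^sup>T *\<^sub>v w) \<le> (sig_max U)^2 * (w \<bullet> w)" if w: "w \<in> carrier_vec d" for w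
  proof -
    have "(U\<^sup>T *\<^sub>v w) \<bullet> (U\<^sup>T *\<^sub>v w) \<le> \<mu> * (w \<bullet> w)" using x(4) w unfolding \<mu>_def B_def by auto
    also have "\<dots> \<le> (sig_max U)^2 * (w \<bullet> w)" using mule sprod_self_nonneg[of w] by (rule mult_right_mono)
    finally show ?thesis .
  qed
  then show ?thesis using mem by auto
qed

lemma sing_min_bound:
  fixes U :: "real mat"
  assumes U: "U \<in> carrier_mat d R" and z: "z \<in> carrier_vec R"
  shows "(sig_min U)^2 * ((U *\<^sub>v z) \<bullet> (U *\<^sub>v z)) \<le> (U\<^sup>T *\<^sub>v (U *\<^sub>v z)) \<bullet> (U\<^sup>T *\<^sub>v (U *\<^sub>v z))"
proof (cases "U *\<^sub>v z = 0\<^sub>v d")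
  case True
  then show ?thesis using U mat_vec_zero[of "U\<^sup>T" R d] by simp
next
  case False
  define B where "B = U\<^sup>T"
  have B: "B \<in> carrier_mat R d" unfolding B_def using U by auto
  define Y where "Y = {y \<in> carrier_vec d. U\<^sup>T *\<^sub>v y = 0\<^sub>v R}"
  have Y: "Y \<subseteq> carrier_vec d" unfolding Y_def by auto
  have inC: "U *\<^sub>v v \<in> orthC d Y" if v: "v \<in> carrier_vec R" for v
  proof -
    have "(U *\<^sub>v v) \<bullet> y = 0" if y: "y \<in> Y" for y
    proof -
      have yc: "y \<in> carrier_vec d" "U\<^sup>T *\<^sub>v y = 0\<^sub>v R" using y unfolding Y_def by auto
      have "(U\<^sup>T *\<^sub>v y) \<bullet> v = y \<bullet> (U *\<^sub>v v)" by (rule transpose_vec_mult_scalar[OF U v yc(1)])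
      then have "y \<bullet> (U *\<^sub>v v) = 0" using yc(2) v by simp
      then show ?thesis using comm_scalar_prod[of y d "U *\<^sub>v v"] yc U v by auto
    qed
    then show ?thesis unfolding orthC_def using U v by auto
  qed
  have inv: "\<forall>x\<in>orthC d Y. B\<^sup>T *\<^sub>v (B *\<^sub>v x) \<in> orthC d Y"
    unfolding B_def using inC U by (auto simp: orthC_def)
  obtain x where x: "x \<in> orthC d Y" "x \<bullet> x = 1"
    "B\<^sup>T *\<^sub>v (B *\<^sub>v x) = ((B *\<^sub>v x) \<bullet> (B *\<^sub>v x)) \<cdot>\<^sub>v x"
    "\<forall>y\<in>orthC d Y. -1 * ((B *\<^sub>v y) \<bullet> (B *\<^sub>v y)) \<le> -1 * (((B *\<^sub>v x) \<bullet> (B *\<^sub>v x)) * (y \<bullet> y))"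
    using var_eigen[OF B Y inC[OF z] False inv, of "-1"] by auto
  have xc: "x \<in> carrier_vec d" using x(1) unfolding orthC_def by auto
  define \<mu> where "\<mu> = (B *\<^sub>v x) \<bullet> (B *\<^sub>v x)"
  have mupos: "\<mu> > 0"
  proof -
    have "B *\<^sub>v x \<noteq> 0\<^sub>v R"
    proof
      assume "B *\<^sub>v x = 0\<^sub>v R"
      then have "x \<in> Y" unfolding Y_def B_def using xc by auto
      then have "x \<bullet> x = 0" using x(1) unfolding orthC_def by auto
      then show False using x(2) by simp
    qed
    then show ?thesis unfolding \<mu>_def using sprod_self_pos[of "B *\<^sub>v x" R] B xc by auto
  qed
  have xnz: "x \<noteq> 0\<^sub>v d" using x(2) by auto
  have "eigenvalue (B * B\<^sup>T) \<mu>"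
    using eig_swap[OF B xc xnz x(3)[folded \<mu>_def]] mupos by simp
  then have "eigenvalue (U\<^sup>T * U) \<mu>" unfolding B_def by simp
  then have mem: "sqrt \<mu> \<in> nz_sing_vals U" using mupos by (rule nz_memI)
  then have le: "sig_min U \<le> sqrt \<mu>" by (rule sig_min_le)
  have "sig_min U > 0" using mem sig_min_pos by blast
  then have mule: "(sig_min U)^2 \<le> \<mu>" using le mupos
    by (metis less_eq_real_def power_mono real_sqrt_pow2)
  have "(sig_min U)^2 * ((U *\<^sub>v z) \<bullet> (U *\<^sub>v z)) \<le> \<mu> * ((U *\<^sub>v z) \<bullet> (U *\<^sub>v z))"
    using mule sprod_self_nonneg by (rule mult_right_mono)
  also have "\<dots> \<le> (B *\<^sub>v (U *\<^sub>v z)) \<bullet> (B *\<^sub>v (U *\<^sub>v z))"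
    using x(4) inC[OF z] unfolding \<mu>_def by force
  finally show ?thesis unfolding B_def .
qed



lemma diag_quad:
  fixes D :: "real mat"
  assumes D: "D \<in> carrier_mat R R" "diagonal_mat D" and y: "y \<in> carrier_vec R"
  shows "y \<bullet> (D *\<^sub>v y) = (\<Sum>j<R. D $$ (j,j) * (y $ j * y $ j))"
proof -
  have row: "(D *\<^sub>v y) $ i = D $$ (i,i) * y $ i" if i: "i < R" for i
  proof -
    have "(D *\<^sub>v y) $ i = (\<Sum>j=0..<R. D $$ (i,j) * y $ j)"
      using D i y by (simp add: scalar_prod_def)
    also have "\<dots> = (\<Sum>j=0..<R. if j = i then D $$ (i,i) * y $ i else 0)"
      using D i unfolding diagonal_mat_def by (intro sum.cong) auto
    also have "\<dots> = D $$ (i,i) * y $ i" using i by simp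
    finally show ?thesis .
  qed
  have "y \<bullet> (D *\<^sub>v y) = (\<Sum>i=0..<R. y $ i * (D *\<^sub>v y) $ i)" using D by (simp add: scalar_prod_def)
  also have "\<dots> = (\<Sum>i<R. D $$ (i,i) * (y $ i * y $ i))"
    using row by (simp add: atLeast0LessThan algebra_simps)
  finally show ?thesis .
qed

lemma sq_sum: "(y :: real vec) \<in> carrier_vec R \<Longrightarrow> y \<bullet> y = (\<Sum>j<R. y $ j * y $ j)"
  by (simp add: scalar_prod_def atLeast0LessThan)

lemma side_bound:
  fixes A U D :: "real mat"
  assumes A: "A \<in> carrier_mat d N" and U: "U \<in> carrier_mat d R"
    and D: "D \<in> carrier_mat R R" "diagonal_mat D"
    and Dlo: "\<forall>j<R. lo \<le> D $$ (j,j)" and Dhi: "\<forall>j<R. D $$ (j,j) \<le> hi"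
    and AA: "A * A\<^sup>T = U * D * U\<^sup>T"
    and s: "s \<in> nz_sing_vals A"
  shows "\<exists>z\<in>carrier_vec R. U *\<^sub>v z \<noteq> 0\<^sub>v d \<and>
     lo * ((U\<^sup>T *\<^sub>v (U *\<^sub>v z)) \<bullet> (U\<^sup>T *\<^sub>v (U *\<^sub>v z))) \<le> s^2 * ((U *\<^sub>v z) \<bullet> (U *\<^sub>v z)) \<and>
     s^2 * ((U *\<^sub>v z) \<bullet> (U *\<^sub>v z)) \<le> hi * ((U\<^sup>T *\<^sub>v (U *\<^sub>v z)) \<bullet> (U\<^sup>T *\<^sub>v (U *\<^sub>v z)))"
proof -
  obtain e where e: "eigenvalue (A\<^sup>T * A) e" "e > 0" "e = s * s" using nz_memD[OF s] by blast
  then obtain v where v: "eigenvector (A\<^sup>T * A) v e" unfolding eigenvalue_def by blast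
  have vc: "v \<in> carrier_vec N" "v \<noteq> 0\<^sub>v N" "(A\<^sup>T * A) *\<^sub>v v = e \<cdot>\<^sub>v v"
    using v A unfolding eigenvector_def by auto
  define w where "w = A *\<^sub>v v"
  have wc: "w \<in> carrier_vec d" unfolding w_def using A vc by auto
  have ATAv: "A\<^sup>T *\<^sub>v w = e \<cdot>\<^sub>v v" unfolding w_def using vc A
    using assoc_mult_mat_vec[of "A\<^sup>T" N d A N v] by simp
  have wnz: "w \<noteq> 0\<^sub>v d"
  proof
    assume "w = 0\<^sub>v d"
    then have "e \<cdot>\<^sub>v v = 0\<^sub>v N" using ATAv A mat_vec_zero[of "A\<^sup>T" N d] by simp
    then show False using smult_vec_zero_imp[OF vc(1)] e(2) vc(2) by auto
  qed
  have AAw: "(U * D * U\<^sup>T) *\<^sub>v w = e \<cdot>\<^sub>v w"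
  proof -
    have "(U * D * U\<^sup>T) *\<^sub>v w = (A * A\<^sup>T) *\<^sub>v w" using AA by simp
    also have "\<dots> = A *\<^sub>v (A\<^sup>T *\<^sub>v w)" using assoc_mult_mat_vec[of A d N "A\<^sup>T" d w] A wc by simp
    also have "\<dots> = e \<cdot>\<^sub>v w" unfolding ATAv w_def using A vc by (simp add: mult_mat_vec)
    finally show ?thesis .
  qed
  define y where "y = U\<^sup>T *\<^sub>v w"
  have yc: "y \<in> carrier_vec R" unfolding y_def using U wc by auto
  have UDy: "(U * D * U\<^sup>T) *\<^sub>v w = U *\<^sub>v (D *\<^sub>v y)"
    unfolding y_def using assoc_mult_mat_vec[of "U * D" d R "U\<^sup>T" d w]
      assoc_mult_mat_vec[of U d R D R "U\<^sup>T *\<^sub>v w"] U D wc by simp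
  define z where "z = (1 / e) \<cdot>\<^sub>v (D *\<^sub>v y)"
  have zc: "z \<in> carrier_vec R" unfolding z_def using D yc by auto
  have Uz: "U *\<^sub>v z = w"
  proof -
    have "U *\<^sub>v z = (1 / e) \<cdot>\<^sub>v (U *\<^sub>v (D *\<^sub>v y))" unfolding z_def using U D yc by (simp add: mult_mat_vec)
    also have "\<dots> = (1 / e) \<cdot>\<^sub>v (e \<cdot>\<^sub>v w)" using UDy AAw by simp
    also have "\<dots> = w" using e(2) by (simp add: smult_smult_assoc)
    finally show ?thesis .
  qed
  have quad: "e * (w \<bullet> w) = (\<Sum>j<R. D $$ (j,j) * (y $ j * y $ j))"
  proof -
    have "w \<bullet> (U *\<^sub>v (D *\<^sub>v y)) = y \<bullet> (D *\<^sub>v y)"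
      unfolding y_def using transpose_vec_mult_scalar[OF U, of "D *\<^sub>v y" w] D yc wc by (simp add: y_def)
    also have "\<dots> = (\<Sum>j<R. D $$ (j,j) * (y $ j * y $ j))" by (rule diag_quad[OF D yc])
    finally have "w \<bullet> (U *\<^sub>v (D *\<^sub>v y)) = (\<Sum>j<R. D $$ (j,j) * (y $ j * y $ j))" .
    moreover have "w \<bullet> (U *\<^sub>v (D *\<^sub>v y)) = e * (w \<bullet> w)"
    proof -
      have "U *\<^sub>v (D *\<^sub>v y) = e \<cdot>\<^sub>v w" using UDy AAw by simp
      then show ?thesis using wc by (simp add: scalar_prod_smult_distrib[of w d])
    qed
    ultimately show ?thesis by simp
  qed
  have "lo * (y \<bullet> y) \<le> e * (w \<bullet> w)"
    unfolding quad sq_sum[OF yc] sum_distrib_left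
    by (intro sum_mono mult_right_mono) (use Dlo in auto)
  moreover have "e * (w \<bullet> w) \<le> hi * (y \<bullet> y)"
    unfolding quad sq_sum[OF yc] sum_distrib_left
    by (intro sum_mono mult_right_mono) (use Dhi in auto)
  ultimately show ?thesis using zc wnz unfolding Uz[symmetric] y_def e(3) power2_eq_square
    by (intro bexI[of _ z]) auto
qed

lemma cond_bound:
  fixes A U D :: "real mat"
  assumes A: "A \<in> carrier_mat d N" and U: "U \<in> carrier_mat d R"
    and D: "D \<in> carrier_mat R R" "diagonal_mat D"
    and Dlo: "\<forall>j<R. lo \<le> D $$ (j,j)" and Dhi: "\<forall>j<R. D $$ (j,j) \<le> hi"
    and AA: "A * A\<^sup>T = U * D * U\<^sup>T"
    and ne: "nz_sing_vals A \<noteq> {}"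
    and lo: "lo > 0" and c1: "c1 > 0"
    and cb: "\<forall>z\<in>carrier_vec R. U *\<^sub>v z \<noteq> 0\<^sub>v d \<longrightarrow>
        c1 * ((U *\<^sub>v z) \<bullet> (U *\<^sub>v z)) \<le> (U\<^sup>T *\<^sub>v (U *\<^sub>v z)) \<bullet> (U\<^sup>T *\<^sub>v (U *\<^sub>v z)) \<and>
        (U\<^sup>T *\<^sub>v (U *\<^sub>v z)) \<bullet> (U\<^sup>T *\<^sub>v (U *\<^sub>v z)) \<le> c2 * ((U *\<^sub>v z) \<bullet> (U *\<^sub>v z))"
  shows "cond_num A \<le> sqrt (hi * c2 / (lo * c1))"
proof -
  have bnds: "lo * c1 \<le> s^2 \<and> s^2 \<le> hi * c2" if s: "s \<in> nz_sing_vals A" for s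
  proof -
    obtain z where z: "z \<in> carrier_vec R" "U *\<^sub>v z \<noteq> 0\<^sub>v d"
      "lo * ((U\<^sup>T *\<^sub>v (U *\<^sub>v z)) \<bullet> (U\<^sup>T *\<^sub>v (U *\<^sub>v z))) \<le> s^2 * ((U *\<^sub>v z) \<bullet> (U *\<^sub>v z))"
      "s^2 * ((U *\<^sub>v z) \<bullet> (U *\<^sub>v z)) \<le> hi * ((U\<^sup>T *\<^sub>v (U *\<^sub>v z)) \<bullet> (U\<^sup>T *\<^sub>v (U *\<^sub>v z)))"
      using side_bound[OF A U D Dlo Dhi AA s] by blast
    define ww where "ww = (U *\<^sub>v z) \<bullet> (U *\<^sub>v z)"
    define qq where "qq = (U\<^sup>T *\<^sub>v (U *\<^sub>v z)) \<bullet> (U\<^sup>T *\<^sub>v (U *\<^sub>v z))"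
    have wpos: "ww > 0" unfolding ww_def using sprod_self_pos[of "U *\<^sub>v z" d] z U by auto
    have q1: "c1 * ww \<le> qq" and q2: "qq \<le> c2 * ww" using cb z unfolding ww_def qq_def by auto
    have hi0: "hi \<ge> 0" using Dhi Dlo lo
    proof -
      have "s^2 * ww > 0" using wpos nz_pos[OF s] by simp
      then have "hi * qq > 0" using z(4) unfolding ww_def qq_def by linarith
      moreover have "qq \<ge> 0" unfolding qq_def by (rule sprod_self_nonneg)
      ultimately show ?thesis by (smt (verit) mult_nonpos_nonneg)
    qed
    have "lo * c1 * ww \<le> s^2 * ww"
    proof -
      have "lo * (c1 * ww) \<le> lo * qq" using q1 lo by simp
      then show ?thesis using z(3) unfolding ww_def qq_def by (simp add: mult.assoc)
    qed
    then have 1: "lo * c1 \<le> s^2" using wpos by simp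
    have "s^2 * ww \<le> hi * c2 * ww"
    proof -
      have "hi * qq \<le> hi * (c2 * ww)" using q2 hi0 by (simp add: mult_left_mono)
      then show ?thesis using z(4) unfolding ww_def qq_def by (simp add: mult.assoc)
    qed
    then have 2: "s^2 \<le> hi * c2" using wpos by simp
    show ?thesis using 1 2 by simp
  qed
  have mx: "(sig_max A)^2 \<le> hi * c2" using bnds[OF sig_max_in[OF ne]] by simp
  have mn: "lo * c1 \<le> (sig_min A)^2" using bnds[OF sig_min_in[OF ne]] by simp
  have pmin: "sig_min A > 0" using sig_min_pos[OF ne] .
  have pmax: "sig_max A > 0" using sig_max_pos[OF ne] .
  have "cond_num A = sqrt ((sig_max A)^2 / (sig_min A)^2)"
    unfolding cond_num_def using pmin pmax by (simp add: real_sqrt_divide)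
  also have "\<dots> \<le> sqrt (hi * c2 / (lo * c1))"
  proof (intro real_sqrt_le_mono frac_le)
    show "0 \<le> hi * c2" using mx by (smt (verit) zero_le_power2)
  qed (use mx mn lo c1 pmin in auto)
  finally show ?thesis .
qed



section \<open>Block bookkeeping\<close>

lemma blk_off_Suc: "blk_off r (Suc k) = blk_off r k + r k"
  unfolding blk_off_def by simp

lemma blk_off_mono: "k \<le> k' \<Longrightarrow> blk_off r k \<le> blk_off r k'"
  unfolding blk_off_def by (intro sum_mono2) auto

lemma blk_off_lt: "k < K \<Longrightarrow> i < r k \<Longrightarrow> blk_off r k + i < blk_off r K"
  using blk_off_mono[of "Suc k" K r] blk_off_Suc[of r k] by simp

lemma blk_of_eq:
  assumes "i < r k"
  shows "blk_of r (blk_off r k + i) = k"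
  unfolding blk_of_def
proof (rule Least_equality)
  show "blk_off r k + i < blk_off r (Suc k)" using assms blk_off_Suc[of r k] by simp
next
  fix k' assume "blk_off r k + i < blk_off r (Suc k')"
  then show "k \<le> k'" using blk_off_mono[of "Suc k'" k r] by (cases "Suc k' \<le> k") auto
qed

lemma sum_split_add: "(\<Sum>j<(a::nat)+b. f j) = (\<Sum>j<a. f j) + (\<Sum>i<b. f (a + i))"
  by (induction b) (auto simp: add.assoc)

lemma blk_sum: "(\<Sum>j<blk_off r K. f j) = (\<Sum>k<K. \<Sum>i<r k. f (blk_off r k + i))"
proof (induction K)
  case 0
  then show ?case by (simp add: blk_off_def)
next
  case (Suc K)
  have "(\<Sum>j<blk_off r (Suc K). f j) = (\<Sum>j<blk_off r K + r K. f j)" by (simp add: blk_off_Suc)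
  also have "\<dots> = (\<Sum>j<blk_off r K. f j) + (\<Sum>i<r K. f (blk_off r K + i))"
    by (rule sum_split_add)
  finally show ?case using Suc by simp
qed

lemma blk_decomp: "j < blk_off r K \<Longrightarrow> \<exists>k<K. \<exists>i<r k. j = blk_off r k + i"
proof (induction K)
  case 0 then show ?case by (simp add: blk_off_def)
next
  case (Suc K)
  show ?case
  proof (cases "j < blk_off r K")
    case True then show ?thesis using Suc.IH by (meson less_SucI)
  next
    case False
    then have "j - blk_off r K < r K" "j = blk_off r K + (j - blk_off r K)"
      using Suc.prems blk_off_Suc[of r K] by auto
    then show ?thesis by blast
  qed
qed

lemma hcat_carrier: "hcat d r K Us \<in> carrier_mat d (blk_off r K)"
  unfolding hcat_def by simp

lemma hcat_idx:
  assumes "a < d" "k < K" "i < r k"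
  shows "hcat d r K Us $$ (a, blk_off r k + i) = Us k $$ (a, i)"
  using assms blk_off_lt[of k K i r] blk_of_eq[of i r k] unfolding hcat_def by simp

lemma block_diag_carrier: "block_diag r K Ds \<in> carrier_mat (blk_off r K) (blk_off r K)"
  unfolding block_diag_def by (cases "k = k'") simp_all

lemma block_diag_idx:
  assumes "k < K" "i < r k" "k' < K" "i' < r k'"
  shows "block_diag r K Ds $$ (blk_off r k + i, blk_off r k' + i') = (if k = k' then Ds k $$ (i,i') else 0)"
  using assms blk_off_lt[of k K i r] blk_off_lt[of k' K i' r] blk_of_eq[of i r k] blk_of_eq[of i' r k']
  unfolding block_diag_def by (cases "k = k'") simp_all

lemma triple_idx':
  fixes X Y Z :: "real mat"
  assumes X: "X \<in> carrier_mat d n" and Y: "Y \<in> carrier_mat n n" and Z: "Z \<in> carrier_mat d' n"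
    and a: "a < d" and b: "b < d'"
  shows "(X * Y * Z\<^sup>T) $$ (a,b) = (\<Sum>j<n. \<Sum>j'<n. X $$ (a,j') * Y $$ (j',j) * Z $$ (b,j))"
proof -
  have e: "(X * Y * Z\<^sup>T) $$ (a,b) = row (X * Y) a \<bullet> col Z\<^sup>T b"
    using X Y Z a b by (subst index_mult_mat) auto
  have "row (X * Y) a \<bullet> col Z\<^sup>T b = (\<Sum>j=0..<n. (X * Y) $$ (a,j) * Z $$ (b,j))"
    unfolding scalar_prod_def using X Y Z a b by (intro sum.cong) auto
  also have "\<dots> = (\<Sum>j<n. \<Sum>j'<n. X $$ (a,j') * Y $$ (j',j) * Z $$ (b,j))"
    unfolding atLeast0LessThan
  proof (intro sum.cong refl)
    fix j assume "j \<in> {..<n}"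
    then have "(X * Y) $$ (a,j) = (\<Sum>j'=0..<n. X $$ (a,j') * Y $$ (j',j))"
      using X Y a by (subst index_mult_mat) (auto simp: scalar_prod_def intro!: sum.cong)
    then show "(X * Y) $$ (a,j) * Z $$ (b,j) = (\<Sum>j'<n. X $$ (a,j') * Y $$ (j',j) * Z $$ (b,j))"
      by (simp add: atLeast0LessThan sum_distrib_right)
  qed
  finally show ?thesis using e by simp
qed

lemma hcat_block_product:
  fixes Ws Ds :: "nat \<Rightarrow> real mat"
  assumes Ws: "\<forall>k<K. Ws k \<in> carrier_mat d (r k)" and Ds: "\<forall>k<K. Ds k \<in> carrier_mat (r k) (r k)"
    and a: "a < d" and b: "b < d"
  shows "(hcat d r K Ws * block_diag r K Ds * (hcat d r K Ws)\<^sup>T) $$ (a,b)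
       = (\<Sum>k<K. (Ws k * Ds k * (Ws k)\<^sup>T) $$ (a,b))"
proof -
  let ?U = "hcat d r K Ws" and ?D = "block_diag r K Ds" and ?R = "blk_off r K"
  have "(?U * ?D * ?U\<^sup>T) $$ (a,b) = (\<Sum>j<?R. \<Sum>j'<?R. ?U $$ (a,j') * ?D $$ (j',j) * ?U $$ (b,j))"
    by (rule triple_idx'[OF hcat_carrier block_diag_carrier hcat_carrier a b])
  also have "\<dots> = (\<Sum>k<K. \<Sum>i<r k. \<Sum>k'<K. \<Sum>i'<r k'.
      ?U $$ (a, blk_off r k' + i') * ?D $$ (blk_off r k' + i', blk_off r k + i) * ?U $$ (b, blk_off r k + i))"
    unfolding blk_sum ..
  also have "\<dots> = (\<Sum>k<K. \<Sum>i<r k. \<Sum>k'<K. if k' = k then (\<Sum>i'<r k.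
      Ws k $$ (a, i') * Ds k $$ (i', i) * Ws k $$ (b, i)) else 0)"
  proof (intro sum.cong refl)
    fix k i k' assume k: "k \<in> {..<K}" and i: "i \<in> {..<r k}" and k': "k' \<in> {..<K}"
    show "(\<Sum>i'<r k'. ?U $$ (a, blk_off r k' + i') * ?D $$ (blk_off r k' + i', blk_off r k + i) * ?U $$ (b, blk_off r k + i))
      = (if k' = k then (\<Sum>i'<r k. Ws k $$ (a, i') * Ds k $$ (i', i) * Ws k $$ (b, i)) else 0)"
    proof (cases "k' = k")
      case True
      then show ?thesis using k i by (auto simp: hcat_idx block_diag_idx a b intro!: sum.cong)
    next
      case False
      then show ?thesis using k i k' by (auto simp: hcat_idx block_diag_idx a b intro!: sum.neutral)
    qed
  qed
  also have "\<dots> = (\<Sum>k<K. \<Sum>i<r k. \<Sum>i'<r k. Ws k $$ (a, i') * Ds k $$ (i', i) * Ws k $$ (b, i))"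
  proof (rule sum.cong[OF refl], rule sum.cong[OF refl])
    fix k i assume k: "k \<in> {..<K}"
    show "(\<Sum>k'<K. if k' = k then (\<Sum>i'<r k. Ws k $$ (a, i') * Ds k $$ (i', i) * Ws k $$ (b, i)) else 0)
      = (\<Sum>i'<r k. Ws k $$ (a, i') * Ds k $$ (i', i) * Ws k $$ (b, i))"
      using k by (subst sum.delta) auto
  qed
  also have "\<dots> = (\<Sum>k<K. (Ws k * Ds k * (Ws k)\<^sup>T) $$ (a,b))"
  proof (intro sum.cong refl)
    fix k assume "k \<in> {..<K}"
    then have k: "k < K" by simp
    show "(\<Sum>i<r k. \<Sum>i'<r k. Ws k $$ (a, i') * Ds k $$ (i', i) * Ws k $$ (b, i)) = (Ws k * Ds k * (Ws k)\<^sup>T) $$ (a,b)"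
      using triple_idx'[of "Ws k" d "r k" "Ds k" "Ws k" d a b] Ws Ds k a b by simp
  qed
  finally show ?thesis .
qed



lemma gram_svd:
  fixes U S V :: "real mat"
  assumes U: "U \<in> carrier_mat d r" and S: "S \<in> carrier_mat r r" and V: "V \<in> carrier_mat e r"
    and VV: "V\<^sup>T * V = 1\<^sub>m r"
  shows "(U * S * V\<^sup>T) * (U * S * V\<^sup>T)\<^sup>T = U * (S * S\<^sup>T) * U\<^sup>T"
proof -
  have US: "U * S \<in> carrier_mat d r" using U S by auto
  have t: "(U * S * V\<^sup>T)\<^sup>T = V * (S\<^sup>T * U\<^sup>T)"
  proof -
    have "(U * S * V\<^sup>T)\<^sup>T = (V\<^sup>T)\<^sup>T * (U * S)\<^sup>T" by (rule transpose_mult[OF US]) (use V in auto)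
    also have "(U * S)\<^sup>T = S\<^sup>T * U\<^sup>T" by (rule transpose_mult[OF U S])
    finally show ?thesis by simp
  qed
  have "(U * S * V\<^sup>T) * (V * (S\<^sup>T * U\<^sup>T)) = (U * S) * (V\<^sup>T * (V * (S\<^sup>T * U\<^sup>T)))"
    by (rule assoc_mult_mat[OF US]) (use V U S in auto)
  also have "V\<^sup>T * (V * (S\<^sup>T * U\<^sup>T)) = (V\<^sup>T * V) * (S\<^sup>T * U\<^sup>T)"
    by (rule assoc_mult_mat[symmetric]) (use V U S in auto)
  also have "\<dots> = S\<^sup>T * U\<^sup>T" unfolding VV by (rule left_mult_one_mat) (use U S in auto)
  also have "(U * S) * (S\<^sup>T * U\<^sup>T) = U * (S * (S\<^sup>T * U\<^sup>T))"
    by (rule assoc_mult_mat) (use U S in auto)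
  also have "S * (S\<^sup>T * U\<^sup>T) = (S * S\<^sup>T) * U\<^sup>T"
    by (rule assoc_mult_mat[symmetric]) (use U S in auto)
  also have "U * ((S * S\<^sup>T) * U\<^sup>T) = U * (S * S\<^sup>T) * U\<^sup>T"
    by (rule assoc_mult_mat[symmetric]) (use U S in auto)
  finally show ?thesis unfolding t .
qed

lemma diag_transpose:
  fixes S :: "real mat"
  assumes "S \<in> carrier_mat r r" "diagonal_mat S"
  shows "S\<^sup>T = S"
  using assms unfolding diagonal_mat_def by (intro eq_matI) (auto, metis)

lemma smult_mid_idx:
  fixes U X :: "real mat"
  assumes U: "U \<in> carrier_mat d r" and X: "X \<in> carrier_mat r r" and a: "a < d" and b: "b < d"
  shows "(U * (c \<cdot>\<^sub>m X) * U\<^sup>T) $$ (a,b) = c * (U * X * U\<^sup>T) $$ (a,b)"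
  using triple_idx'[OF U _ U a b, of "c \<cdot>\<^sub>m X"] triple_idx'[OF U X U a b] X
  by (simp add: sum_distrib_left algebra_simps)

lemma sum_div_mod: "(\<Sum>j<(d::nat)*n. f j) = (\<Sum>i<n. \<Sum>c<d. f (i*d + c))"
proof (induction n)
  case 0 then show ?case by simp
next
  case (Suc n)
  have "(\<Sum>j<d * Suc n. f j) = (\<Sum>j<d*n + d. f j)" by (simp add: algebra_simps)
  also have "\<dots> = (\<Sum>j<d*n. f j) + (\<Sum>c<d. f (d*n + c))" by (rule sum_split_add)
  finally show ?case using Suc by (simp add: mult.commute)
qed

lemma sum_group_labels:
  assumes "\<forall>i<n. s i < K"
  shows "(\<Sum>i<n. g (s i)) = (\<Sum>k<K. real (cluster_size n s k) * (g k :: real))"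
proof -
  have "(\<Sum>i<n. g (s i)) = (\<Sum>k<K. \<Sum>i\<in>{i\<in>{..<n}. s i = k}. g (s i))"
    using assms by (intro sum.group[symmetric]) auto
  also have "\<dots> = (\<Sum>k<K. real (cluster_size n s k) * g k)"
  proof (intro sum.cong refl)
    fix k
    have "(\<Sum>i\<in>{i\<in>{..<n}. s i = k}. g (s i)) = (\<Sum>i\<in>{i. i < n \<and> s i = k}. g k)"
      by (rule sum.cong) auto
    then show "(\<Sum>i\<in>{i\<in>{..<n}. s i = k}. g (s i)) = real (cluster_size n s k) * g k"
      by (simp add: cluster_size_def)
  qed
  finally show ?thesis .
qed

lemma unfold1_gram:
  fixes Ms :: "nat \<Rightarrow> real mat"
  assumes Ms: "\<forall>k<K. Ms k \<in> carrier_mat d1 d2" and lab: "\<forall>i<n. s i < K"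
    and a: "a < d1" and b: "b < d1"
  shows "(unfold1 d1 d2 n Ms s * (unfold1 d1 d2 n Ms s)\<^sup>T) $$ (a,b)
       = (\<Sum>k<K. real (cluster_size n s k) * (Ms k * (Ms k)\<^sup>T) $$ (a,b))"
proof -
  let ?M = "unfold1 d1 d2 n Ms s"
  have "(?M * ?M\<^sup>T) $$ (a,b) = (\<Sum>j<d2*n. ?M $$ (a,j) * ?M $$ (b,j))"
    using a b unfolding unfold1_def by (simp add: scalar_prod_def atLeast0LessThan)
  also have "\<dots> = (\<Sum>i<n. \<Sum>c<d2. Ms (s i) $$ (a,c) * Ms (s i) $$ (b,c))"
    unfolding sum_div_mod
  proof (intro sum.cong refl)
    fix i c assume i: "i \<in> {..<n}" and c: "c \<in> {..<d2}"
    have "i * d2 + c < d2 * n"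
    proof -
      have "i * d2 + c < i * d2 + d2" using c by simp
      also have "\<dots> = (i + 1) * d2" by simp
      also have "\<dots> \<le> n * d2" using i by (intro mult_right_mono) auto
      finally show ?thesis by (simp add: mult.commute)
    qed
    moreover have "(i * d2 + c) div d2 = i" "(i * d2 + c) mod d2 = c" using c by auto
    ultimately show "?M $$ (a, i * d2 + c) * ?M $$ (b, i * d2 + c) = Ms (s i) $$ (a,c) * Ms (s i) $$ (b,c)"
      using a b unfolding unfold1_def by simp
  qed
  also have "\<dots> = (\<Sum>i<n. (Ms (s i) * (Ms (s i))\<^sup>T) $$ (a,b))"
  proof (intro sum.cong refl)
    fix i assume "i \<in> {..<n}"
    then have "Ms (s i) \<in> carrier_mat d1 d2" using Ms lab by auto
    then show "(\<Sum>c<d2. Ms (s i) $$ (a,c) * Ms (s i) $$ (b,c)) = (Ms (s i) * (Ms (s i))\<^sup>T) $$ (a,b)"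
      using a b by (simp add: scalar_prod_def atLeast0LessThan)
  qed
  also have "\<dots> = (\<Sum>k<K. real (cluster_size n s k) * (Ms k * (Ms k)\<^sup>T) $$ (a,b))"
    by (rule sum_group_labels[OF lab])
  finally show ?thesis .
qed

lemma unfold2_gram:
  fixes Ms :: "nat \<Rightarrow> real mat"
  assumes Ms: "\<forall>k<K. Ms k \<in> carrier_mat d1 d2" and lab: "\<forall>i<n. s i < K"
    and a: "a < d2" and b: "b < d2"
  shows "(unfold2 d1 d2 n Ms s * (unfold2 d1 d2 n Ms s)\<^sup>T) $$ (a,b)
       = (\<Sum>k<K. real (cluster_size n s k) * ((Ms k)\<^sup>T * ((Ms k)\<^sup>T)\<^sup>T) $$ (a,b))"
proof -
  let ?M = "unfold2 d1 d2 n Ms s"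
  have "(?M * ?M\<^sup>T) $$ (a,b) = (\<Sum>j<d1*n. ?M $$ (a,j) * ?M $$ (b,j))"
    using a b unfolding unfold2_def by (simp add: scalar_prod_def atLeast0LessThan)
  also have "\<dots> = (\<Sum>i<n. \<Sum>c<d1. Ms (s i) $$ (c,a) * Ms (s i) $$ (c,b))"
    unfolding sum_div_mod
  proof (intro sum.cong refl)
    fix i c assume i: "i \<in> {..<n}" and c: "c \<in> {..<d1}"
    have "i * d1 + c < d1 * n"
    proof -
      have "i * d1 + c < i * d1 + d1" using c by simp
      also have "\<dots> = (i + 1) * d1" by simp
      also have "\<dots> \<le> n * d1" using i by (intro mult_right_mono) auto
      finally show ?thesis by (simp add: mult.commute)
    qed
    moreover have "(i * d1 + c) div d1 = i" "(i * d1 + c) mod d1 = c" using c by auto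
    ultimately show "?M $$ (a, i * d1 + c) * ?M $$ (b, i * d1 + c) = Ms (s i) $$ (c,a) * Ms (s i) $$ (c,b)"
      using a b unfolding unfold2_def by simp
  qed
  also have "\<dots> = (\<Sum>i<n. ((Ms (s i))\<^sup>T * ((Ms (s i))\<^sup>T)\<^sup>T) $$ (a,b))"
  proof (intro sum.cong refl)
    fix i assume "i \<in> {..<n}"
    then have "Ms (s i) \<in> carrier_mat d1 d2" using Ms lab by auto
    then show "(\<Sum>c<d1. Ms (s i) $$ (c,a) * Ms (s i) $$ (c,b)) = ((Ms (s i))\<^sup>T * ((Ms (s i))\<^sup>T)\<^sup>T) $$ (a,b)"
      using a b by (simp add: scalar_prod_def atLeast0LessThan)
  qed
  also have "\<dots> = (\<Sum>k<K. real (cluster_size n s k) * ((Ms k)\<^sup>T * ((Ms k)\<^sup>T)\<^sup>T) $$ (a,b))"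
    by (rule sum_group_labels[OF lab])
  finally show ?thesis .
qed



lemma col_ortho:
  fixes W :: "real mat"
  assumes W: "W \<in> carrier_mat d r" and WW: "W\<^sup>T * W = 1\<^sub>m r" and i: "i < r" and j: "j < r"
  shows "col W i \<bullet> col W j = (if i = j then 1 else 0)"
proof -
  have "(W\<^sup>T * W) $$ (i,j) = row W\<^sup>T i \<bullet> col W j" using W i j by (subst index_mult_mat) auto
  also have "row W\<^sup>T i = col W i" using W i by simp
  finally show ?thesis using WW i j by simp
qed

lemma rank_span_lemma:
  fixes W U :: "real mat"
  assumes W: "W \<in> carrier_mat n r0" and WW: "W\<^sup>T * W = 1\<^sub>m r0"
    and U: "U \<in> carrier_mat n R" and r0R: "r0 \<le> R"
    and colsU: "\<forall>i<r0. col U i = col W i"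
    and rk: "vec_space.rank n U = r0"
    and z: "z \<in> carrier_vec R"
  shows "\<exists>z'\<in>carrier_vec r0. U *\<^sub>v z = W *\<^sub>v z'"
proof -
  interpret V: vec_space "TYPE(real)" n .
  define S0 where "S0 = set (cols W)"
  have S0: "S0 = col W ` {..<r0}" unfolding S0_def cols_def using W by auto
  have S0c: "S0 \<subseteq> carrier_vec n" unfolding S0 using W by auto
  have fin: "finite S0" unfolding S0_def by simp
  have ort: "col W i \<bullet> col W j = (if i = j then 1 else 0)" if "i < r0" "j < r0" for i j
    using col_ortho[OF W WW that] .
  have dist: "distinct (cols W)"
  proof -
    have neq: "col W i \<noteq> col W j" if "i < r0" "j < r0" "i \<noteq> j" for i j
      using ort[OF that(1,2)] ort[OF that(1,1)] that(3) by auto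
    have "inj_on (col W) {0..<r0}" unfolding inj_on_def using neq by (metis atLeastLessThan_iff)
    then show ?thesis unfolding cols_def using W by (simp add: distinct_map)
  qed
  have card: "card S0 = r0" unfolding S0_def using distinct_card[OF dist] W by simp
  have S0U: "S0 \<subseteq> set (cols U)"
  proof
    fix x assume "x \<in> S0"
    then obtain i where i: "i < r0" "x = col W i" unfolding S0 by auto
    then have "x = col U i" using colsU by simp
    then show "x \<in> set (cols U)" using U i r0R unfolding cols_def by auto
  qed
  have indep: "V.lin_indpt S0"
  proof
    assume "V.lin_dep S0"
    then obtain u where u: "u \<in> S0" "u \<in> V.span (S0 - {u})" using V.lindep_span[OF S0c fin] by blast
    obtain i where i: "i < r0" "u = col W i" using u(1) unfolding S0 by auto
    have sub: "S0 - {u} \<subseteq> carrier_vec n" using S0c by auto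
    have "u \<in> V.orthogonal_complement (S0 - {u})"
      unfolding V.orthogonal_complement_def
    proof (intro CollectI conjI ballI)
      show "u \<in> carrier_vec n" using u(1) S0c by auto
      fix y assume y: "y \<in> S0 - {u}"
      then obtain j where j: "j < r0" "y = col W j" unfolding S0 by auto
      then have "i \<noteq> j" using y i by auto
      then show "u \<bullet> y = 0" using ort[OF i(1) j(1)] i j by simp
    qed
    then have "u \<in> V.orthogonal_complement (V.span (S0 - {u}))"
      using V.in_orthogonal_complement_span[OF sub] by simp
    then have "u \<bullet> u = 0" using u(2) unfolding V.orthogonal_complement_def by auto
    then show False using ort[OF i(1) i(1)] i by simp
  qed
  have colsin: "set (cols U) \<subseteq> V.span S0"
  proof
    fix c assume c: "c \<in> set (cols U)"
    show "c \<in> V.span S0"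
    proof (rule ccontr)
      assume nc: "c \<notin> V.span S0"
      have cc: "c \<in> carrier_vec n" using c U unfolding cols_def by auto
      have cnS: "c \<notin> S0" using nc V.span_mem[OF S0c] by blast
      have "V.lin_indpt (S0 \<union> {c})" using V.lin_dep_iff_in_span[OF S0c indep cc cnS] nc by simp
      moreover have "S0 \<union> {c} \<subseteq> set (cols U)" using S0U c by auto
      ultimately have "card (S0 \<union> {c}) \<le> V.rank U" using V.rank_ge_card_indpt[OF U] by blast
      moreover have "card (S0 \<union> {c}) = r0 + 1" using card fin cnS by simp
      ultimately show False using rk by simp
    qed
  qed
  have "V.span (set (cols U)) \<subseteq> V.span S0"
    by (rule V.span_is_subset[OF colsin V.span_is_submodule[OF S0c]])
  moreover have "U *\<^sub>v z \<in> V.span (set (cols U))"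
    using V.col_space_eq[OF U] U z unfolding V.col_space_def by auto
  ultimately have "U *\<^sub>v z \<in> V.col_space W" unfolding V.col_space_def S0_def by auto
  then obtain x where "x \<in> carrier_vec r0" "W *\<^sub>v x = U *\<^sub>v z" using V.col_space_eq[OF W] W by auto
  then show ?thesis by metis
qed



lemma mult_unit_vec_col:
  fixes A :: "real mat"
  assumes "A \<in> carrier_mat m k" "i < k"
  shows "A *\<^sub>v unit_vec k i = col A i"
  using assms by (intro eq_vecI) (auto simp: scalar_prod_right_unit)

lemma col_hcat:
  assumes Ws: "Ws k \<in> carrier_mat d (r k)" and k: "k < K" and i: "i < r k"
  shows "col (hcat d r K Ws) (blk_off r k + i) = col (Ws k) i"
proof (rule eq_vecI)
  show "dim_vec (col (hcat d r K Ws) (blk_off r k + i)) = dim_vec (col (Ws k) i)"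
    using Ws by (simp add: hcat_def)
  fix a assume "a < dim_vec (col (Ws k) i)"
  then have a: "a < d" using Ws by simp
  show "col (hcat d r K Ws) (blk_off r k + i) $ a = col (Ws k) i $ a"
    using hcat_idx[where a=a and d=d and k=k and K=K and i=i and r=r] a Ws blk_off_lt[of k K i r] k i by (simp add: hcat_def)
qed

lemma hcat_w0:
  fixes Ws :: "nat \<Rightarrow> real mat"
  assumes K: "K \<ge> 1" and W0: "Ws 0 \<in> carrier_mat d (r 0)" and WW: "(Ws 0)\<^sup>T * Ws 0 = 1\<^sub>m (r 0)"
    and r0: "r 0 \<ge> 1"
  shows "\<exists>w0\<in>carrier_vec d. (hcat d r K Ws)\<^sup>T *\<^sub>v w0 \<noteq> 0\<^sub>v (blk_off r K)"
proof -
  let ?U = "hcat d r K Ws"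
  define w0 where "w0 = col (Ws 0) 0"
  have w0c: "w0 \<in> carrier_vec d" unfolding w0_def using W0 by auto
  have R: "0 < blk_off r K" using blk_off_lt[of 0 K 0 r] K r0 by (simp add: blk_off_def)
  have c0: "col ?U 0 = col (Ws 0) 0" using col_hcat[where Ws=Ws and k=0 and d=d and r=r and K=K and i=0] W0 K r0 by (simp add: blk_off_def)
  have "(?U\<^sup>T *\<^sub>v w0) $ 0 = col ?U 0 \<bullet> w0" using R hcat_carrier[of d r K Ws] by simp
  also have "\<dots> = 1" unfolding c0 w0_def using col_ortho[OF W0 WW, of 0 0] r0 by simp
  finally have "(?U\<^sup>T *\<^sub>v w0) $ 0 = 1" .
  then have "?U\<^sup>T *\<^sub>v w0 \<noteq> 0\<^sub>v (blk_off r K)" using R by auto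
  then show ?thesis using w0c by blast
qed

lemma nz_nonempty_side:
  fixes A U D :: "real mat"
  assumes A: "A \<in> carrier_mat d N" and U: "U \<in> carrier_mat d R"
    and D: "D \<in> carrier_mat R R" "diagonal_mat D"
    and Dlo: "\<forall>j<R. lo \<le> D $$ (j,j)" and lo: "lo > 0"
    and AA: "A * A\<^sup>T = U * D * U\<^sup>T"
    and w0: "w0 \<in> carrier_vec d" "U\<^sup>T *\<^sub>v w0 \<noteq> 0\<^sub>v R"
  shows "nz_sing_vals A \<noteq> {}"
proof -
  define y where "y = U\<^sup>T *\<^sub>v w0"
  have yc: "y \<in> carrier_vec R" unfolding y_def using U w0 by auto
  have "(A\<^sup>T *\<^sub>v w0) \<bullet> (A\<^sup>T *\<^sub>v w0) = w0 \<bullet> (A *\<^sub>v (A\<^sup>T *\<^sub>v w0))"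
    using transpose_vec_mult_scalar[OF A, of "A\<^sup>T *\<^sub>v w0" w0] A w0 by auto
  also have "A *\<^sub>v (A\<^sup>T *\<^sub>v w0) = (A * A\<^sup>T) *\<^sub>v w0"
    using assoc_mult_mat_vec[of A d N "A\<^sup>T" d w0] A w0 by simp
  also have "\<dots> = U *\<^sub>v (D *\<^sub>v y)" unfolding AA y_def using assoc_mult_mat_vec[of "U * D" d R "U\<^sup>T" d w0]
      assoc_mult_mat_vec[of U d R D R "U\<^sup>T *\<^sub>v w0"] U D w0 by simp
  also have "w0 \<bullet> (U *\<^sub>v (D *\<^sub>v y)) = y \<bullet> (D *\<^sub>v y)"
    using transpose_vec_mult_scalar[OF U, of "D *\<^sub>v y" w0] D yc w0 by (simp add: y_def)
  also have "\<dots> = (\<Sum>j<R. D $$ (j,j) * (y $ j * y $ j))" by (rule diag_quad[OF D yc])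
  finally have eq: "(A\<^sup>T *\<^sub>v w0) \<bullet> (A\<^sup>T *\<^sub>v w0) = (\<Sum>j<R. D $$ (j,j) * (y $ j * y $ j))" .
  have "lo * (y \<bullet> y) \<le> (\<Sum>j<R. D $$ (j,j) * (y $ j * y $ j))"
    unfolding sq_sum[OF yc] sum_distrib_left
    by (intro sum_mono mult_right_mono) (use Dlo in auto)
  moreover have "y \<bullet> y > 0" using sprod_self_pos[OF yc] w0(2) unfolding y_def by simp
  ultimately have "(A\<^sup>T *\<^sub>v w0) \<bullet> (A\<^sup>T *\<^sub>v w0) > 0" using eq lo
    by (smt (verit) mult_pos_pos)
  then have "A\<^sup>T *\<^sub>v w0 \<noteq> 0\<^sub>v N" by auto
  then show ?thesis using sing_max_bound[OF A w0(1)] by blast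
qed

lemma q_split:
  fixes Ws :: "nat \<Rightarrow> real mat"
  assumes Ws: "\<forall>k<K. Ws k \<in> carrier_mat d (r k)" and w: "w \<in> carrier_vec d"
  shows "((hcat d r K Ws)\<^sup>T *\<^sub>v w) \<bullet> ((hcat d r K Ws)\<^sup>T *\<^sub>v w)
     = (\<Sum>k<K. ((Ws k)\<^sup>T *\<^sub>v w) \<bullet> ((Ws k)\<^sup>T *\<^sub>v w))"
proof -
  let ?U = "hcat d r K Ws"
  have yc: "?U\<^sup>T *\<^sub>v w \<in> carrier_vec (blk_off r K)" using hcat_carrier[of d r K Ws] w by auto
  have coord: "(?U\<^sup>T *\<^sub>v w) $ (blk_off r k + i) = ((Ws k)\<^sup>T *\<^sub>v w) $ i" if k: "k < K" and i: "i < r k" for k i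
  proof -
    have "(?U\<^sup>T *\<^sub>v w) $ (blk_off r k + i) = col ?U (blk_off r k + i) \<bullet> w"
      using blk_off_lt[of k K i r] k i hcat_carrier[of d r K Ws] by simp
    also have "\<dots> = col (Ws k) i \<bullet> w" using col_hcat[of Ws k d r K i] Ws k i by simp
    also have "\<dots> = ((Ws k)\<^sup>T *\<^sub>v w) $ i" using Ws[rule_format, OF k] i by simp
    finally show ?thesis .
  qed
  have "(?U\<^sup>T *\<^sub>v w) \<bullet> (?U\<^sup>T *\<^sub>v w) = (\<Sum>k<K. \<Sum>i<r k. ((Ws k)\<^sup>T *\<^sub>v w) $ i * ((Ws k)\<^sup>T *\<^sub>v w) $ i)"
    unfolding sq_sum[OF yc] blk_sum using coord by simp
  also have "\<dots> = (\<Sum>k<K. ((Ws k)\<^sup>T *\<^sub>v w) \<bullet> ((Ws k)\<^sup>T *\<^sub>v w))"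
  proof (intro sum.cong refl)
    fix k assume "k \<in> {..<K}"
    then have "(Ws k)\<^sup>T *\<^sub>v w \<in> carrier_vec (r k)" using Ws w by auto
    then show "(\<Sum>i<r k. ((Ws k)\<^sup>T *\<^sub>v w) $ i * ((Ws k)\<^sup>T *\<^sub>v w) $ i) = ((Ws k)\<^sup>T *\<^sub>v w) \<bullet> ((Ws k)\<^sup>T *\<^sub>v w)"
      using sq_sum by simp
  qed
  finally show ?thesis .
qed

lemma bessel:
  fixes W :: "real mat"
  assumes W: "W \<in> carrier_mat d r" and WW: "W\<^sup>T * W = 1\<^sub>m r" and w: "w \<in> carrier_vec d"
  shows "(W\<^sup>T *\<^sub>v w) \<bullet> (W\<^sup>T *\<^sub>v w) \<le> w \<bullet> w"
proof -
  define t where "t = W\<^sup>T *\<^sub>v w"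
  have tc: "t \<in> carrier_vec r" unfolding t_def using W w by auto
  define p where "p = W *\<^sub>v t"
  have pc: "p \<in> carrier_vec d" unfolding p_def using W tc by auto
  have wp: "w \<bullet> p = t \<bullet> t" unfolding p_def using transpose_vec_mult_scalar[OF W tc w] t_def by simp
  have WTp: "W\<^sup>T *\<^sub>v p = t" unfolding p_def using assoc_mult_mat_vec[of "W\<^sup>T" r d W r t] W tc WW by simp
  have pp: "p \<bullet> p = t \<bullet> t"
    using transpose_vec_mult_scalar[OF W tc pc] WTp unfolding p_def
    by (metis W comm_scalar_prod mult_mat_vec_carrier tc)
  have "0 \<le> (w - p) \<bullet> (w - p)" by (rule sprod_self_nonneg)
  also have "(w - p) \<bullet> (w - p) = w \<bullet> w - 2 * (w \<bullet> p) + p \<bullet> p"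
    using w pc by (simp add: minus_scalar_prod_distrib[of _ d] scalar_prod_minus_distrib[of _ d]
        comm_scalar_prod[of p d w])
  finally show ?thesis unfolding t_def[symmetric] using wp pp by simp
qed

lemma bessel_eq:
  fixes W :: "real mat"
  assumes W: "W \<in> carrier_mat d r" and WW: "W\<^sup>T * W = 1\<^sub>m r" and z: "z \<in> carrier_vec r"
  shows "(W\<^sup>T *\<^sub>v (W *\<^sub>v z)) \<bullet> (W\<^sup>T *\<^sub>v (W *\<^sub>v z)) = (W *\<^sub>v z) \<bullet> (W *\<^sub>v z)"
proof -
  have e: "W\<^sup>T *\<^sub>v (W *\<^sub>v z) = z" using assoc_mult_mat_vec[of "W\<^sup>T" r d W r z] W z WW by simp
  have "(W *\<^sub>v z) \<bullet> (W *\<^sub>v z) = (W\<^sup>T *\<^sub>v (W *\<^sub>v z)) \<bullet> z"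
    using transpose_vec_mult_scalar[OF W z, of "W *\<^sub>v z"] W z by simp
  then show ?thesis unfolding e by simp
qed



lemma hcat_orth:
  fixes Ws :: "nat \<Rightarrow> real mat"
  assumes Ws: "\<forall>k<K. Ws k \<in> carrier_mat d (r k)" and WW: "\<forall>k<K. (Ws k)\<^sup>T * Ws k = 1\<^sub>m (r k)"
    and orth: "\<forall>k<K. \<forall>l<K. k \<noteq> l \<longrightarrow> (\<forall>x y. x \<in> carrier_vec (r k) \<longrightarrow> y \<in> carrier_vec (r l)
              \<longrightarrow> (Ws k *\<^sub>v x) \<bullet> (Ws l *\<^sub>v y) = 0)"
  shows "(hcat d r K Ws)\<^sup>T * hcat d r K Ws = 1\<^sub>m (blk_off r K)"
proof (rule eq_matI)
  let ?U = "hcat d r K Ws"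
  have U: "?U \<in> carrier_mat d (blk_off r K)" by (rule hcat_carrier)
  fix j j' assume "j < dim_row (1\<^sub>m (blk_off r K) :: real mat)" "j' < dim_col (1\<^sub>m (blk_off r K) :: real mat)"
  then have j: "j < blk_off r K" and j': "j' < blk_off r K" by auto
  obtain k i where ki: "k < K" "i < r k" "j = blk_off r k + i" using blk_decomp[OF j] by blast
  obtain k' i' where ki': "k' < K" "i' < r k'" "j' = blk_off r k' + i'" using blk_decomp[OF j'] by blast
  have "(?U\<^sup>T * ?U) $$ (j, j') = col ?U j \<bullet> col ?U j'" using U j j' by (subst index_mult_mat) auto
  also have "\<dots> = col (Ws k) i \<bullet> col (Ws k') i'"
    using col_hcat[of Ws k d r K i] col_hcat[of Ws k' d r K i'] Ws ki ki' by simp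
  also have "\<dots> = (if j = j' then 1 else 0)"
  proof (cases "k = k'")
    case True
    then have "(i = i') = (j = j')" using ki ki' by auto
    then show ?thesis using col_ortho[of "Ws k" d "r k" i i'] Ws WW ki ki' True by auto
  next
    case False
    have ne: "j \<noteq> j'"
    proof
      assume "j = j'"
      then have "blk_of r j = blk_of r j'" by simp
      then show False using blk_of_eq[of i r k] blk_of_eq[of i' r k'] ki ki' False by simp
    qed
    have "col (Ws k) i \<bullet> col (Ws k') i' = (Ws k *\<^sub>v unit_vec (r k) i) \<bullet> (Ws k' *\<^sub>v unit_vec (r k') i')"
      using mult_unit_vec_col[of "Ws k" d "r k" i] mult_unit_vec_col[of "Ws k'" d "r k'" i'] Ws ki ki' by simp
    also have "\<dots> = 0" using orth ki(1) ki'(1) False ki ki' by auto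
    finally show ?thesis using ne by simp
  qed
  finally show "(?U\<^sup>T * ?U) $$ (j, j') = 1\<^sub>m (blk_off r K) $$ (j, j')" using j j' by simp
qed (auto simp: hcat_def)

lemma diag_sq:
  fixes S :: "real mat"
  assumes S: "S \<in> carrier_mat r r" "diagonal_mat S" and i: "i < r" and j: "j < r"
  shows "(S * S) $$ (i,j) = (if i = j then S $$ (i,i) * S $$ (i,i) else 0)"
proof -
  have "(S * S) $$ (i,j) = (\<Sum>l=0..<r. S $$ (i,l) * S $$ (l,j))"
    using S i j by (simp add: scalar_prod_def)
  also have "\<dots> = (\<Sum>l=0..<r. if l = i then S $$ (i,i) * S $$ (i,j) else 0)"
    using S i j unfolding diagonal_mat_def by (intro sum.cong) auto
  also have "\<dots> = S $$ (i,i) * S $$ (i,j)" using i by simp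
  finally show ?thesis using S i j unfolding diagonal_mat_def by auto
qed

lemma D_props:
  fixes Ss :: "nat \<Rightarrow> real mat" and c :: "nat \<Rightarrow> real"
  assumes Ss: "\<forall>k<K. Ss k \<in> carrier_mat (r k) (r k)" "\<forall>k<K. diagonal_mat (Ss k)"
  defines "D \<equiv> block_diag r K (\<lambda>k. c k \<cdot>\<^sub>m (Ss k * Ss k))"
  shows "D \<in> carrier_mat (blk_off r K) (blk_off r K)" "diagonal_mat D"
    "\<And>k i. k < K \<Longrightarrow> i < r k \<Longrightarrow> D $$ (blk_off r k + i, blk_off r k + i) = c k * (Ss k $$ (i,i) * Ss k $$ (i,i))"
proof -
  show Dc: "D \<in> carrier_mat (blk_off r K) (blk_off r K)" unfolding D_def by (rule block_diag_carrier)
  show "D $$ (blk_off r k + i, blk_off r k + i) = c k * (Ss k $$ (i,i) * Ss k $$ (i,i))" if "k < K" "i < r k" for k i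
    unfolding D_def using block_diag_idx[where k=k and K=K and i=i and r=r and k'=k and i'=i] that Ss(1)[rule_format, OF that(1)] Ss(2)[rule_format, OF that(1)]
      diag_sq[of "Ss k" "r k" i i] by simp
  show "diagonal_mat D" unfolding diagonal_mat_def
  proof (intro allI impI)
    fix j j' assume j: "j < dim_row D" and j': "j' < dim_col D" and ne: "j \<noteq> j'"
    obtain k i where ki: "k < K" "i < r k" "j = blk_off r k + i" using blk_decomp[of j r K] j Dc by auto
    obtain k' i' where ki': "k' < K" "i' < r k'" "j' = blk_off r k' + i'" using blk_decomp[of j' r K] j' Dc by auto
    show "D $$ (j, j') = 0"
    proof (cases "k = k'")
      case True
      then have "i \<noteq> i'" using ne ki ki' by auto
      then show ?thesis unfolding D_def ki(3) ki'(3) using block_diag_idx[where k=k and K=K and i=i and r=r and k'=k' and i'=i'] True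
          diag_sq[of "Ss k" "r k" i i'] Ss(1)[rule_format, OF ki(1)] Ss(2)[rule_format, OF ki(1)] ki ki' by simp
    next
      case False
      then show ?thesis unfolding D_def ki(3) ki'(3) using block_diag_idx[where k=k and K=K and i=i and r=r and k'=k' and i'=i'] ki ki' by simp
    qed
  qed
qed

lemma transpose3:
  fixes U S V :: "real mat"
  assumes U: "U \<in> carrier_mat d r" and S: "S \<in> carrier_mat r r" and V: "V \<in> carrier_mat e r"
  shows "(U * S * V\<^sup>T)\<^sup>T = V * S\<^sup>T * U\<^sup>T"
proof -
  have US: "U * S \<in> carrier_mat d r" using U S by auto
  have "(U * S * V\<^sup>T)\<^sup>T = (V\<^sup>T)\<^sup>T * (U * S)\<^sup>T" by (rule transpose_mult[OF US]) (use V in auto)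
  also have "(U * S)\<^sup>T = S\<^sup>T * U\<^sup>T" by (rule transpose_mult[OF U S])
  also have "V\<^sup>T\<^sup>T * (S\<^sup>T * U\<^sup>T) = V * S\<^sup>T * U\<^sup>T"
    by (simp, rule assoc_mult_mat[symmetric]) (use U S V in auto)
  finally show ?thesis .
qed

lemma sv_in_nz:
  fixes U S V :: "real mat"
  assumes U: "U \<in> carrier_mat d r" and S: "S \<in> carrier_mat r r" "diagonal_mat S"
    and V: "V \<in> carrier_mat e r" and UU: "U\<^sup>T * U = 1\<^sub>m r" and VV: "V\<^sup>T * V = 1\<^sub>m r"
    and i: "i < r" and pos: "S $$ (i,i) > 0"
  shows "S $$ (i,i) \<in> nz_sing_vals (U * S * V\<^sup>T)"
proof -
  let ?M = "U * S * V\<^sup>T"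
  have ST: "S\<^sup>T = S" by (rule diag_transpose[OF S])
  have MT: "?M\<^sup>T = V * S * U\<^sup>T" using transpose3[OF U S(1) V] ST by simp
  have "?M\<^sup>T * ?M = ?M\<^sup>T * (?M\<^sup>T)\<^sup>T" by simp
  also have "\<dots> = V * (S * S\<^sup>T) * V\<^sup>T" unfolding MT by (rule gram_svd[OF V S(1) U UU])
  finally have G: "?M\<^sup>T * ?M = V * (S * S) * V\<^sup>T" using ST by simp
  define x where "x = V *\<^sub>v unit_vec r i"
  have xc: "x \<in> carrier_vec e" unfolding x_def using V by auto
  have VTx: "V\<^sup>T *\<^sub>v x = unit_vec r i" unfolding x_def
    using assoc_mult_mat_vec[of "V\<^sup>T" r e V r "unit_vec r i"] V VV by simp
  have SSu: "(S * S) *\<^sub>v unit_vec r i = (S $$ (i,i) * S $$ (i,i)) \<cdot>\<^sub>v unit_vec r i"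
  proof (rule eq_vecI)
    fix j assume "j < dim_vec ((S $$ (i,i) * S $$ (i,i)) \<cdot>\<^sub>v unit_vec r i)"
    then have j: "j < r" by simp
    have "(S * S) *\<^sub>v unit_vec r i = col (S * S) i" by (rule mult_unit_vec_col) (use S i in auto)
    then have "((S * S) *\<^sub>v unit_vec r i) $ j = (S * S) $$ (j, i)" using S j i by simp
    then show "((S * S) *\<^sub>v unit_vec r i) $ j = ((S $$ (i,i) * S $$ (i,i)) \<cdot>\<^sub>v unit_vec r i) $ j"
      using diag_sq[OF S j i] j i by auto
  qed (use S in simp)
  have ev: "(?M\<^sup>T * ?M) *\<^sub>v x = (S $$ (i,i) * S $$ (i,i)) \<cdot>\<^sub>v x"
  proof -
    have "(?M\<^sup>T * ?M) *\<^sub>v x = (V * (S * S)) *\<^sub>v (V\<^sup>T *\<^sub>v x)" unfolding G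
      using assoc_mult_mat_vec[of "V * (S * S)" e r "V\<^sup>T" e x] V S xc by simp
    also have "\<dots> = V *\<^sub>v ((S * S) *\<^sub>v unit_vec r i)" unfolding VTx
      using assoc_mult_mat_vec[of V e r "S * S" r "unit_vec r i"] V S by simp
    also have "\<dots> = (S $$ (i,i) * S $$ (i,i)) \<cdot>\<^sub>v x" unfolding SSu x_def using V by (simp add: mult_mat_vec)
    finally show ?thesis .
  qed
  have xnz: "x \<noteq> 0\<^sub>v e"
  proof
    assume "x = 0\<^sub>v e"
    then have "V\<^sup>T *\<^sub>v x = 0\<^sub>v r" using V mat_vec_zero[of "V\<^sup>T" r e] by simp
    then show False using VTx i by (metis index_unit_vec(1) index_zero_vec(1) zero_neq_one)
  qed
  have dimr: "dim_row (?M\<^sup>T * ?M) = e" using U S V by simp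
  have "eigenvalue (?M\<^sup>T * ?M) (S $$ (i,i) * S $$ (i,i))"
    unfolding eigenvalue_def eigenvector_def dimr using xc xnz ev by blast
  then have "sqrt (S $$ (i,i) * S $$ (i,i)) \<in> nz_sing_vals ?M" using pos by (intro nz_memI) auto
  then show ?thesis using pos by simp
qed



lemma gram_to_block:
  fixes A :: "real mat" and Ws Ds :: "nat \<Rightarrow> real mat" and c :: "nat \<Rightarrow> real"
  assumes A: "A \<in> carrier_mat d N" and Ws: "\<forall>k<K. Ws k \<in> carrier_mat d (r k)"
    and Ds: "\<forall>k<K. Ds k \<in> carrier_mat (r k) (r k)"
    and ent: "\<forall>a<d. \<forall>b<d. (A * A\<^sup>T) $$ (a,b) = (\<Sum>k<K. c k * (Ws k * Ds k * (Ws k)\<^sup>T) $$ (a,b))"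
  shows "A * A\<^sup>T = hcat d r K Ws * block_diag r K (\<lambda>k. c k \<cdot>\<^sub>m Ds k) * (hcat d r K Ws)\<^sup>T"
proof (rule eq_matI)
  fix a b assume "a < dim_row (hcat d r K Ws * block_diag r K (\<lambda>k. c k \<cdot>\<^sub>m Ds k) * (hcat d r K Ws)\<^sup>T)"
    "b < dim_col (hcat d r K Ws * block_diag r K (\<lambda>k. c k \<cdot>\<^sub>m Ds k) * (hcat d r K Ws)\<^sup>T)"
  then have a: "a < d" and b: "b < d" by (auto simp: hcat_def)
  have Ds': "\<forall>k<K. c k \<cdot>\<^sub>m Ds k \<in> carrier_mat (r k) (r k)" using Ds by auto
  have "(hcat d r K Ws * block_diag r K (\<lambda>k. c k \<cdot>\<^sub>m Ds k) * (hcat d r K Ws)\<^sup>T) $$ (a,b)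
      = (\<Sum>k<K. (Ws k * (c k \<cdot>\<^sub>m Ds k) * (Ws k)\<^sup>T) $$ (a,b))"
    by (rule hcat_block_product[OF Ws Ds' a b])
  also have "\<dots> = (\<Sum>k<K. c k * (Ws k * Ds k * (Ws k)\<^sup>T) $$ (a,b))"
  proof (intro sum.cong refl)
    fix k assume "k \<in> {..<K}"
    then show "(Ws k * (c k \<cdot>\<^sub>m Ds k) * (Ws k)\<^sup>T) $$ (a,b) = c k * (Ws k * Ds k * (Ws k)\<^sup>T) $$ (a,b)"
      by (intro smult_mid_idx) (use Ws Ds a b in auto)
  qed
  also have "\<dots> = (A * A\<^sup>T) $$ (a,b)" using ent a b by simp
  finally show "(A * A\<^sup>T) $$ (a,b) = (hcat d r K Ws * block_diag r K (\<lambda>k. c k \<cdot>\<^sub>m Ds k) * (hcat d r K Ws)\<^sup>T) $$ (a,b)" by simp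
qed (use A in \<open>auto simp: hcat_def\<close>)

lemma side_all:
  fixes A :: "real mat" and Ws Ss :: "nat \<Rightarrow> real mat" and c :: "nat \<Rightarrow> real"
  assumes A: "A \<in> carrier_mat d N" and Ws: "\<forall>k<K. Ws k \<in> carrier_mat d (r k)"
    and WW: "\<forall>k<K. (Ws k)\<^sup>T * Ws k = 1\<^sub>m (r k)"
    and K: "K \<ge> 1" and rpos: "\<forall>k<K. r k \<ge> 1"
    and Ss: "\<forall>k<K. Ss k \<in> carrier_mat (r k) (r k)" "\<forall>k<K. diagonal_mat (Ss k)"
    and AA: "A * A\<^sup>T = hcat d r K Ws * block_diag r K (\<lambda>k. c k \<cdot>\<^sub>m (Ss k * Ss k)) * (hcat d r K Ws)\<^sup>T"
    and Db: "\<forall>k<K. \<forall>i<r k. lo \<le> c k * (Ss k $$ (i,i) * Ss k $$ (i,i)) \<and> c k * (Ss k $$ (i,i) * Ss k $$ (i,i)) \<le> hi"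
    and lo: "lo > 0"
  shows "nz_sing_vals A \<noteq> {} \<and> nz_sing_vals (hcat d r K Ws) \<noteq> {} \<and>
    cond_num A \<le> sqrt (hi * (sig_max (hcat d r K Ws))^2 / (lo * (sig_min (hcat d r K Ws))^2)) \<and>
    (vec_space.rank d (hcat d r K Ws) = r 0 \<longrightarrow> cond_num A \<le> sqrt (hi * real K / (lo * 1))) \<and>
    ((\<forall>k<K. \<forall>l<K. k \<noteq> l \<longrightarrow> (\<forall>x y. x \<in> carrier_vec (r k) \<longrightarrow> y \<in> carrier_vec (r l)
              \<longrightarrow> (Ws k *\<^sub>v x) \<bullet> (Ws l *\<^sub>v y) = 0)) \<longrightarrow> cond_num A \<le> sqrt (hi * 1 / (lo * 1)))"
proof -
  let ?U = "hcat d r K Ws" and ?R = "blk_off r K"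
  define D where "D = block_diag r K (\<lambda>k. c k \<cdot>\<^sub>m (Ss k * Ss k))"
  have U: "?U \<in> carrier_mat d ?R" by (rule hcat_carrier)
  note Dp = D_props[OF Ss, where c=c, folded D_def]
  have Dlo: "\<forall>j<?R. lo \<le> D $$ (j,j)" and Dhi: "\<forall>j<?R. D $$ (j,j) \<le> hi"
  proof (safe)
    fix j assume j: "j < ?R"
    obtain k i where ki: "k < K" "i < r k" "j = blk_off r k + i" using blk_decomp[OF j] by blast
    show "lo \<le> D $$ (j,j)" "D $$ (j,j) \<le> hi" using Dp(3)[OF ki(1,2)] Db ki by auto
  qed
  have AA': "A * A\<^sup>T = ?U * D * ?U\<^sup>T" using AA unfolding D_def .
  have W0: "Ws 0 \<in> carrier_mat d (r 0)" "(Ws 0)\<^sup>T * Ws 0 = 1\<^sub>m (r 0)" "r 0 \<ge> 1"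
    using Ws WW rpos K by auto
  obtain w0 where w0: "w0 \<in> carrier_vec d" "?U\<^sup>T *\<^sub>v w0 \<noteq> 0\<^sub>v ?R"
    using hcat_w0[where Ws=Ws and d=d and r=r and K=K] K W0 by blast
  have neA: "nz_sing_vals A \<noteq> {}" by (rule nz_nonempty_side[OF A U Dp(1,2) Dlo lo AA' w0])
  have smax: "nz_sing_vals ?U \<noteq> {}" "\<forall>w\<in>carrier_vec d. (?U\<^sup>T *\<^sub>v w) \<bullet> (?U\<^sup>T *\<^sub>v w) \<le> (sig_max ?U)^2 * (w \<bullet> w)"
    using sing_max_bound[OF U w0] by auto
  have c3: "cond_num A \<le> sqrt (hi * (sig_max ?U)^2 / (lo * (sig_min ?U)^2))"
  proof (rule cond_bound[OF A U Dp(1,2) Dlo Dhi AA' neA lo])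
    show "(sig_min ?U)^2 > 0" using sig_min_pos[OF smax(1)] by simp
    show "\<forall>z\<in>carrier_vec ?R. ?U *\<^sub>v z \<noteq> 0\<^sub>v d \<longrightarrow>
        (sig_min ?U)^2 * ((?U *\<^sub>v z) \<bullet> (?U *\<^sub>v z)) \<le> (?U\<^sup>T *\<^sub>v (?U *\<^sub>v z)) \<bullet> (?U\<^sup>T *\<^sub>v (?U *\<^sub>v z)) \<and>
        (?U\<^sup>T *\<^sub>v (?U *\<^sub>v z)) \<bullet> (?U\<^sup>T *\<^sub>v (?U *\<^sub>v z)) \<le> (sig_max ?U)^2 * ((?U *\<^sub>v z) \<bullet> (?U *\<^sub>v z))"
      using sing_min_bound[OF U] smax(2) U by auto
  qed
  have c5: "cond_num A \<le> sqrt (hi * real K / (lo * 1))" if rk: "vec_space.rank d ?U = r 0"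
  proof (rule cond_bound[OF A U Dp(1,2) Dlo Dhi AA' neA lo])
    show "(1::real) > 0" by simp
    show "\<forall>z\<in>carrier_vec ?R. ?U *\<^sub>v z \<noteq> 0\<^sub>v d \<longrightarrow>
        1 * ((?U *\<^sub>v z) \<bullet> (?U *\<^sub>v z)) \<le> (?U\<^sup>T *\<^sub>v (?U *\<^sub>v z)) \<bullet> (?U\<^sup>T *\<^sub>v (?U *\<^sub>v z)) \<and>
        (?U\<^sup>T *\<^sub>v (?U *\<^sub>v z)) \<bullet> (?U\<^sup>T *\<^sub>v (?U *\<^sub>v z)) \<le> real K * ((?U *\<^sub>v z) \<bullet> (?U *\<^sub>v z))"
    proof (intro ballI impI conjI)
      fix z :: "real vec" assume z: "z \<in> carrier_vec ?R"
      define w where "w = ?U *\<^sub>v z"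
      have wc: "w \<in> carrier_vec d" unfolding w_def using U z by auto
      have qs: "(?U\<^sup>T *\<^sub>v w) \<bullet> (?U\<^sup>T *\<^sub>v w) = (\<Sum>k<K. ((Ws k)\<^sup>T *\<^sub>v w) \<bullet> ((Ws k)\<^sup>T *\<^sub>v w))"
        by (rule q_split[OF Ws wc])
      have "(\<Sum>k<K. ((Ws k)\<^sup>T *\<^sub>v w) \<bullet> ((Ws k)\<^sup>T *\<^sub>v w)) \<le> (\<Sum>k<K. w \<bullet> w)"
        using bessel Ws WW wc by (intro sum_mono) auto
      then show "(?U\<^sup>T *\<^sub>v (?U *\<^sub>v z)) \<bullet> (?U\<^sup>T *\<^sub>v (?U *\<^sub>v z)) \<le> real K * ((?U *\<^sub>v z) \<bullet> (?U *\<^sub>v z))"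
        using qs unfolding w_def by simp
      have colsU: "\<forall>i<r 0. col ?U i = col (Ws 0) i"
        using col_hcat[where Ws=Ws and k=0 and d=d and r=r and K=K] W0 K by (simp add: blk_off_def)
      have r0R: "r 0 \<le> ?R" using blk_off_mono[of 1 K r] K by (simp add: blk_off_def)
      obtain z' where z': "z' \<in> carrier_vec (r 0)" "w = Ws 0 *\<^sub>v z'"
        using rank_span_lemma[OF W0(1,2) U r0R colsU rk z] unfolding w_def by blast
      have "w \<bullet> w = ((Ws 0)\<^sup>T *\<^sub>v w) \<bullet> ((Ws 0)\<^sup>T *\<^sub>v w)"
        using bessel_eq[OF W0(1,2) z'(1)] z'(2) by simp
      also have "\<dots> \<le> (\<Sum>k<K. ((Ws k)\<^sup>T *\<^sub>v w) \<bullet> ((Ws k)\<^sup>T *\<^sub>v w))"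
        using K by (intro member_le_sum) (auto intro: sprod_self_nonneg)
      finally show "1 * ((?U *\<^sub>v z) \<bullet> (?U *\<^sub>v z)) \<le> (?U\<^sup>T *\<^sub>v (?U *\<^sub>v z)) \<bullet> (?U\<^sup>T *\<^sub>v (?U *\<^sub>v z))"
        using qs unfolding w_def by simp
    qed
  qed
  have c6: "cond_num A \<le> sqrt (hi * 1 / (lo * 1))"
    if orth: "\<forall>k<K. \<forall>l<K. k \<noteq> l \<longrightarrow> (\<forall>x y. x \<in> carrier_vec (r k) \<longrightarrow> y \<in> carrier_vec (r l)
              \<longrightarrow> (Ws k *\<^sub>v x) \<bullet> (Ws l *\<^sub>v y) = 0)"
  proof (rule cond_bound[OF A U Dp(1,2) Dlo Dhi AA' neA lo])
    have UU: "?U\<^sup>T * ?U = 1\<^sub>m ?R" by (rule hcat_orth[OF Ws WW orth])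
    show "(1::real) > 0" by simp
    show "\<forall>z\<in>carrier_vec ?R. ?U *\<^sub>v z \<noteq> 0\<^sub>v d \<longrightarrow>
        1 * ((?U *\<^sub>v z) \<bullet> (?U *\<^sub>v z)) \<le> (?U\<^sup>T *\<^sub>v (?U *\<^sub>v z)) \<bullet> (?U\<^sup>T *\<^sub>v (?U *\<^sub>v z)) \<and>
        (?U\<^sup>T *\<^sub>v (?U *\<^sub>v z)) \<bullet> (?U\<^sup>T *\<^sub>v (?U *\<^sub>v z)) \<le> 1 * ((?U *\<^sub>v z) \<bullet> (?U *\<^sub>v z))"
      using bessel_eq[OF U UU] by simp
  qed
  show ?thesis using neA smax(1) c3 c5 c6 by blast
qed



lemma arith_sq:
  fixes X Y N1 N0 c1 c2 :: real
  assumes "X > 0" "Y > 0" "N0 > 0" "c1 > 0"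
  shows "sqrt ((N1 * X^2) * c2 / ((N0 * Y^2) * c1)) = X / Y * sqrt (N1 * c2 / (N0 * c1))"
proof -
  have "(N1 * X^2) * c2 / ((N0 * Y^2) * c1) = (X / Y)^2 * (N1 * c2 / (N0 * c1))"
    using assms by (simp add: field_simps power2_eq_square)
  then have "sqrt ((N1 * X^2) * c2 / ((N0 * Y^2) * c1)) = sqrt ((X / Y)^2) * sqrt (N1 * c2 / (N0 * c1))"
    by (simp only: real_sqrt_mult)
  moreover have "sqrt ((X / Y)^2) = X / Y" using assms by simp
  ultimately show ?thesis using assms by simp
qed

theorem lemma3p4:
  fixes d1 d2 n K :: nat
    and r :: "nat \<Rightarrow> nat"
    and Ms Us Ss Vs :: "nat \<Rightarrow> real mat"
    and s :: "nat \<Rightarrow> nat"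
  defines "nk \<equiv> cluster_size n s"
  defines "nmin \<equiv> Min (nk ` {0..<K})"
  defines "nmax \<equiv> Max (nk ` {0..<K})"
  defines "alpha \<equiv> real nmin / (real n / real K)"
  defines "M1 \<equiv> unfold1 d1 d2 n Ms s"
  defines "M2 \<equiv> unfold2 d1 d2 n Ms s"
  defines "kappa1 \<equiv> cond_num M1"
  defines "kappa2 \<equiv> cond_num M2"
  defines "kappa0 \<equiv> Max ((\<lambda>k. sig_max (Ms k)) ` {0..<K}) / Min ((\<lambda>k. sig_min (Ms k)) ` {0..<K})"
  defines "U \<equiv> hcat d1 r K Us"
  defines "V \<equiv> hcat d2 r K Vs"
  defines "D \<equiv> block_diag r K (\<lambda>k. real (nk k) \<cdot>\<^sub>m (Ss k * Ss k))"
  assumes K_pos: "K \<ge> 1"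
    and r_pos: "\<forall>k<K. r k \<ge> 1"
    and Ms_dim: "\<forall>k<K. Ms k \<in> carrier_mat d1 d2"
    and Us_dim: "\<forall>k<K. Us k \<in> carrier_mat d1 (r k)"
    and Vs_dim: "\<forall>k<K. Vs k \<in> carrier_mat d2 (r k)"
    and Ss_dim: "\<forall>k<K. Ss k \<in> carrier_mat (r k) (r k)"
    and Us_orth: "\<forall>k<K. (Us k)\<^sup>T * Us k = 1\<^sub>m (r k)"
    and Vs_orth: "\<forall>k<K. (Vs k)\<^sup>T * Vs k = 1\<^sub>m (r k)"
    and Ss_diag: "\<forall>k<K. diagonal_mat (Ss k)"
    and Ss_pos: "\<forall>k<K. \<forall>i<r k. Ss k $$ (i,i) > 0"
    and Ss_sorted: "\<forall>k<K. \<forall>i j. i \<le> j \<longrightarrow> j < r k \<longrightarrow> Ss k $$ (j,j) \<le> Ss k $$ (i,i)"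
    and svd: "\<forall>k<K. Ms k = Us k * Ss k * (Vs k)\<^sup>T"
    and labels: "\<forall>i<n. s i < K"
    and nk_pos: "\<forall>k<K. nk k \<ge> 1"
  shows "M1 * M1\<^sup>T = U * D * U\<^sup>T
    \<and> M2 * M2\<^sup>T = V * D * V\<^sup>T
    \<and> kappa1 \<le> kappa0 * cond_num U * sqrt (real nmax / real nmin)
    \<and> kappa2 \<le> kappa0 * cond_num V * sqrt (real nmax / real nmin)
    \<and> (r 0 = Max (r ` {0..<K}) \<and> vec_space.rank d1 U = r 0 \<and> vec_space.rank d2 V = r 0
           \<longrightarrow> max kappa1 kappa2 \<le> kappa0 * sqrt (real K ^ 2 / alpha))
    \<and> ((\<forall>k<K. \<forall>l<K. k \<noteq> l \<longrightarrow> (\<forall>x y. x \<in> carrier_vec (r k) \<longrightarrow> y \<in> carrier_vec (r l)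
              \<longrightarrow> (Us k *\<^sub>v x) \<bullet> (Us l *\<^sub>v y) = 0)) \<and>
         (\<forall>k<K. \<forall>l<K. k \<noteq> l \<longrightarrow> (\<forall>x y. x \<in> carrier_vec (r k) \<longrightarrow> y \<in> carrier_vec (r l)
              \<longrightarrow> (Vs k *\<^sub>v x) \<bullet> (Vs l *\<^sub>v y) = 0))
           \<longrightarrow> max kappa1 kappa2 \<le> kappa0 * sqrt (real K / alpha))"
proof -
  have K0: "0 < K" using K_pos by simp
  have finnk: "finite (nk ` {0..<K})" by simp
  have nenk: "nk ` {0..<K} \<noteq> {}" using K0 by auto
  have nmin_le: "nmin \<le> nk k" if "k < K" for k unfolding nmin_def using that by (intro Min_le) auto
  have nmax_ge: "nk k \<le> nmax" if "k < K" for k unfolding nmax_def using that by (intro Max_ge) auto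
  have nmin_pos: "nmin \<ge> 1"
  proof -
    have "nmin \<in> nk ` {0..<K}" unfolding nmin_def using finnk nenk by (rule Min_in)
    then show ?thesis using nk_pos by auto
  qed
  have nk_le_n: "nk k \<le> n" for k
  proof -
    have "{i. i < n \<and> s i = k} \<subseteq> {..<n}" by auto
    then have "card {i. i < n \<and> s i = k} \<le> card {..<n}" by (intro card_mono) auto
    then show ?thesis unfolding nk_def cluster_size_def by simp
  qed
  have nmax_n: "nmax \<le> n"
  proof -
    have "nmax \<in> nk ` {0..<K}" unfolding nmax_def using finnk nenk by (rule Max_in)
    then show ?thesis using nk_le_n by auto
  qed
  have n_pos: "n \<ge> 1" using nmin_pos nmin_le[OF K0] nk_le_n[of 0] by linarith
  define Smax where "Smax = Max ((\<lambda>k. sig_max (Ms k)) ` {0..<K})"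
  define Smin where "Smin = Min ((\<lambda>k. sig_min (Ms k)) ` {0..<K})"
  have k0: "kappa0 = Smax / Smin" unfolding kappa0_def Smax_def Smin_def ..
  have sv: "Ss k $$ (i,i) \<in> nz_sing_vals (Ms k)" if k: "k < K" and i: "i < r k" for k i
    using sv_in_nz[of "Us k" d1 "r k" "Ss k" "Vs k" d2 i] Us_dim Ss_dim Ss_diag Vs_dim Us_orth Vs_orth Ss_pos svd k i
    by auto
  have neMs: "nz_sing_vals (Ms k) \<noteq> {}" if k: "k < K" for k
    using sv[OF k, of 0] r_pos k by auto
  have Smin_le: "Smin \<le> Ss k $$ (i,i)" if k: "k < K" and i: "i < r k" for k i
  proof -
    have "Smin \<le> sig_min (Ms k)" unfolding Smin_def using k by (intro Min_le) auto
    also have "\<dots> \<le> Ss k $$ (i,i)" by (rule sig_min_le[OF sv[OF k i]])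
    finally show ?thesis .
  qed
  have Smax_ge: "Ss k $$ (i,i) \<le> Smax" if k: "k < K" and i: "i < r k" for k i
  proof -
    have "Ss k $$ (i,i) \<le> sig_max (Ms k)" by (rule sig_max_ge[OF sv[OF k i]])
    also have "\<dots> \<le> Smax" unfolding Smax_def using k by (intro Max_ge) auto
    finally show ?thesis .
  qed
  have Smin_pos: "Smin > 0"
  proof -
    have "Smin \<in> (\<lambda>k. sig_min (Ms k)) ` {0..<K}" unfolding Smin_def using K0 by (intro Min_in) auto
    then show ?thesis using sig_min_pos neMs by auto
  qed
  have Smax_pos: "Smax > 0" using Smin_le[OF K0, of 0] Smax_ge[OF K0, of 0] r_pos K0 Smin_pos by force
  define lo where "lo = real nmin * Smin^2"
  define hi where "hi = real nmax * Smax^2"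
  have lo_pos: "lo > 0" unfolding lo_def using nmin_pos Smin_pos by simp
  have Db: "\<forall>k<K. \<forall>i<r k. lo \<le> real (nk k) * (Ss k $$ (i,i) * Ss k $$ (i,i)) \<and>
      real (nk k) * (Ss k $$ (i,i) * Ss k $$ (i,i)) \<le> hi"
  proof (intro allI impI conjI)
    fix k i assume k: "k < K" and i: "i < r k"
    have s1: "Smin * Smin \<le> Ss k $$ (i,i) * Ss k $$ (i,i)"
      using Smin_le[OF k i] Smin_pos by (intro mult_mono) auto
    have s2: "Ss k $$ (i,i) * Ss k $$ (i,i) \<le> Smax * Smax"
      using Smax_ge[OF k i] Smin_le[OF k i] Smin_pos by (intro mult_mono) auto
    show "lo \<le> real (nk k) * (Ss k $$ (i,i) * Ss k $$ (i,i))"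
      unfolding lo_def power2_eq_square by (rule mult_mono) (use nmin_le[OF k] s1 Smin_pos in auto)
    show "real (nk k) * (Ss k $$ (i,i) * Ss k $$ (i,i)) \<le> hi"
      unfolding hi_def power2_eq_square by (rule mult_mono) (use nmax_ge[OF k] s2 in auto)
  qed
  have M1c: "M1 \<in> carrier_mat d1 (d2 * n)" unfolding M1_def unfold1_def by simp
  have M2c: "M2 \<in> carrier_mat d2 (d1 * n)" unfolding M2_def unfold2_def by simp
  have G1: "Ms k * (Ms k)\<^sup>T = Us k * (Ss k * Ss k) * (Us k)\<^sup>T" if k: "k < K" for k
    using gram_svd[of "Us k" d1 "r k" "Ss k" "Vs k" d2] diag_transpose[of "Ss k" "r k"]
      Us_dim Ss_dim Vs_dim Vs_orth Ss_diag svd k by auto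
  have G2: "(Ms k)\<^sup>T * ((Ms k)\<^sup>T)\<^sup>T = Vs k * (Ss k * Ss k) * (Vs k)\<^sup>T" if k: "k < K" for k
  proof -
    have "(Ms k)\<^sup>T = Vs k * Ss k * (Us k)\<^sup>T"
      using transpose3[of "Us k" d1 "r k" "Ss k" "Vs k" d2] diag_transpose[of "Ss k" "r k"]
        Us_dim Ss_dim Vs_dim Ss_diag svd k by auto
    then show ?thesis
      using gram_svd[of "Vs k" d2 "r k" "Ss k" "Us k" d1] diag_transpose[of "Ss k" "r k"]
        Us_dim Ss_dim Vs_dim Us_orth Ss_diag k by auto
  qed
  have SSd: "\<forall>k<K. Ss k * Ss k \<in> carrier_mat (r k) (r k)" using Ss_dim by auto
  have claim1: "M1 * M1\<^sup>T = U * D * U\<^sup>T"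
    unfolding U_def D_def
  proof (rule gram_to_block[OF M1c Us_dim SSd])
    show "\<forall>a<d1. \<forall>b<d1. (M1 * M1\<^sup>T) $$ (a,b) = (\<Sum>k<K. real (nk k) * (Us k * (Ss k * Ss k) * (Us k)\<^sup>T) $$ (a,b))"
      unfolding M1_def nk_def using unfold1_gram[OF Ms_dim labels] G1 by simp
  qed
  have claim2: "M2 * M2\<^sup>T = V * D * V\<^sup>T"
    unfolding V_def D_def
  proof (rule gram_to_block[OF M2c Vs_dim SSd])
    show "\<forall>a<d2. \<forall>b<d2. (M2 * M2\<^sup>T) $$ (a,b) = (\<Sum>k<K. real (nk k) * (Vs k * (Ss k * Ss k) * (Vs k)\<^sup>T) $$ (a,b))"
      unfolding M2_def nk_def using unfold2_gram[OF Ms_dim labels] G2 by simp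
  qed
  note s1 = side_all[OF M1c Us_dim Us_orth K_pos r_pos Ss_dim Ss_diag claim1[unfolded U_def D_def] Db lo_pos, folded U_def]
  note s2 = side_all[OF M2c Vs_dim Vs_orth K_pos r_pos Ss_dim Ss_diag claim2[unfolded V_def D_def] Db lo_pos, folded V_def]
  have nmin_r: "real nmin > 0" using nmin_pos by simp
  have nmax_r: "real nmax \<le> real n" using nmax_n by simp
  have gen3: "sqrt (hi * (sig_max W)^2 / (lo * (sig_min W)^2)) = kappa0 * cond_num W * sqrt (real nmax / real nmin)"
    if ne: "nz_sing_vals W \<noteq> {}" for W
  proof -
    have p1: "sig_min W > 0" "sig_max W > 0" using sig_min_pos[OF ne] sig_max_pos[OF ne] by auto
    have "sqrt (hi * (sig_max W)^2 / (lo * (sig_min W)^2))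
        = Smax / Smin * sqrt (real nmax * (sig_max W)^2 / (real nmin * (sig_min W)^2))"
      unfolding hi_def lo_def by (rule arith_sq) (use Smax_pos Smin_pos nmin_r p1 in auto)
    also have "sqrt (real nmax * (sig_max W)^2 / (real nmin * (sig_min W)^2))
        = sqrt ((real nmax * (sig_max W)^2) * 1 / ((real nmin * (sig_min W)^2) * 1))" by simp
    also have "\<dots> = sig_max W / sig_min W * sqrt (real nmax * 1 / (real nmin * 1))"
      by (rule arith_sq) (use p1 nmin_r in auto)
    finally show ?thesis unfolding k0 cond_num_def by simp
  qed
  have gen5: "sqrt (hi * real K / (lo * 1)) \<le> kappa0 * sqrt (real K ^ 2 / alpha)"
  proof -
    have "sqrt (hi * real K / (lo * 1)) = Smax / Smin * sqrt (real nmax * real K / (real nmin * 1))"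
      unfolding hi_def lo_def by (rule arith_sq) (use Smax_pos Smin_pos nmin_r in auto)
    also have "\<dots> \<le> Smax / Smin * sqrt (real K ^ 2 / alpha)"
    proof (intro mult_left_mono real_sqrt_le_mono)
      have "real K ^ 2 / alpha = real K * real n / real nmin"
        unfolding alpha_def using K0 n_pos nmin_r by (simp add: field_simps power2_eq_square)
      moreover have "real nmax * real K / (real nmin * 1) \<le> real K * real n / real nmin"
        using nmax_r nmin_r K0 by (simp add: divide_right_mono mult.commute)
      ultimately show "real nmax * real K / (real nmin * 1) \<le> real K ^ 2 / alpha" by simp
    qed (use Smax_pos Smin_pos in auto)
    finally show ?thesis unfolding k0 .
  qed
  have gen6: "sqrt (hi * 1 / (lo * 1)) \<le> kappa0 * sqrt (real K / alpha)"
  proof -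
    have "sqrt (hi * 1 / (lo * 1)) = Smax / Smin * sqrt (real nmax * 1 / (real nmin * 1))"
      unfolding hi_def lo_def by (rule arith_sq) (use Smax_pos Smin_pos nmin_r in auto)
    also have "\<dots> \<le> Smax / Smin * sqrt (real K / alpha)"
    proof (intro mult_left_mono real_sqrt_le_mono)
      have "real K / alpha = real n / real nmin"
        unfolding alpha_def using K0 n_pos nmin_r by (simp add: field_simps)
      moreover have "real nmax * 1 / (real nmin * 1) \<le> real n / real nmin"
        using nmax_r nmin_r by (simp add: divide_right_mono)
      ultimately show "real nmax * 1 / (real nmin * 1) \<le> real K / alpha" by simp
    qed (use Smax_pos Smin_pos in auto)
    finally show ?thesis unfolding k0 .
  qed
  have c3: "kappa1 \<le> kappa0 * cond_num U * sqrt (real nmax / real nmin)"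
    using s1 gen3[of U] unfolding kappa1_def by simp
  have c4: "kappa2 \<le> kappa0 * cond_num V * sqrt (real nmax / real nmin)"
    using s2 gen3[of V] unfolding kappa2_def by simp
  have c5: "max kappa1 kappa2 \<le> kappa0 * sqrt (real K ^ 2 / alpha)"
    if "r 0 = Max (r ` {0..<K}) \<and> vec_space.rank d1 U = r 0 \<and> vec_space.rank d2 V = r 0"
    using s1 s2 that gen5 unfolding kappa1_def kappa2_def by auto
  have c6: "max kappa1 kappa2 \<le> kappa0 * sqrt (real K / alpha)"
    if "(\<forall>k<K. \<forall>l<K. k \<noteq> l \<longrightarrow> (\<forall>x y. x \<in> carrier_vec (r k) \<longrightarrow> y \<in> carrier_vec (r l)
              \<longrightarrow> (Us k *\<^sub>v x) \<bullet> (Us l *\<^sub>v y) = 0)) \<and>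
         (\<forall>k<K. \<forall>l<K. k \<noteq> l \<longrightarrow> (\<forall>x y. x \<in> carrier_vec (r k) \<longrightarrow> y \<in> carrier_vec (r l)
              \<longrightarrow> (Vs k *\<^sub>v x) \<bullet> (Vs l *\<^sub>v y) = 0))"
    using s1 s2 that gen6 unfolding kappa1_def kappa2_def by auto
  show ?thesis using claim1 claim2 c3 c4 c5 c6 by blast
qed


end
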